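(* There exist absolute constants $c,C>0$ such that for every distribution $\mathcal D$ on $[0,1]\times\{0,1\}$, $$c\,\mathsf{DistCal}(\mathcal D)^2\le\mathsf{SCDL}(\mathcal D)\le C\sqrt{\mathsf{DistCal}(\mathcal D)}.$$
   Context: For $x\in\mathbb R$ write $x_+=\max\{x,0\}$. For a distribution $\mathcal D$ of $(p,y)\in[0,1]\times\{0,1\}$, a positive integer $m$ and $i\in\{0,\ldots,m\}$, let $w_i(p)=(1-|mp-i|)_+$, $\pi_i=\mathbb E_{\mathcal D}[w_i(p)]$ and $q_i=\mathbb E_{\mathcal D}[w_i(p)y]/\pi_i$ (terms with $\pi_i=0$ are $0$). Define $$\mathsf{SCDL}_m(\mathcal D)=\max_{i=0,\ldots,m}\Big(\sum_{j=0}^{i}\pi_j\big(q_j-\tfrac{i+1}{m}\big)_+ +\sum_{j=i+1}^{m}\pi_j\big(\tfrac im-q_j\big)_+\Big),\quad \mathsf{SCDL}(\mathcal D)=\inf_{m\in\{2^1,2^2,\ldots\}}\max\{\mathsf{SCDL}_m(\mathcal D),1/m\}.$$ A distribution of $(p,y)$ is calibrated if $\mathbb E[y\mid p]=p$. The lower distance to calibration is $\mathsf{DistCal}(\mathcal D)=\inf_{\mathcal J}\mathbb E_{(p,p',y)\sim\mathcal J}|p-p'|$, the infimum over all joint distributions $\mathcal J$ of $(p,p',y)\in[0,1]\times[0,1]\times\{0,1\}$ whose $(p,y)$-marginal is $\mathcal D$ and whose $(p',y)$-marginal is calibrated. *)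

theory Defs
  imports "HOL-Probability.Probability"
begin

text \<open>Distributions of (p,y) in [0,1] x {0,1}; y is encoded as a bool (True = 1).\<close>

definition py_space :: "(real \<times> bool) measure" where
  "py_space = borel \<Otimes>\<^sub>M count_space UNIV"

definition ppy_space :: "(real \<times> real \<times> bool) measure" where
  "ppy_space = borel \<Otimes>\<^sub>M (borel \<Otimes>\<^sub>M count_space UNIV)"

definition is_dist :: "(real \<times> bool) measure \<Rightarrow> bool" where
  "is_dist D \<longleftrightarrow> prob_space D \<and> sets D = sets py_space \<and>
     (AE z in D. fst z \<in> {0..1})"

definition wt :: "nat \<Rightarrow> nat \<Rightarrow> real \<Rightarrow> real" where
  "wt m i p = max (1 - \<bar>real m * p - real i\<bar>) 0"

definition pi_w :: "(real \<times> bool) measure \<Rightarrow> nat \<Rightarrow> nat \<Rightarrow> real" where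
  "pi_w D m i = (\<integral>z. wt m i (fst z) \<partial>D)"

definition q_w :: "(real \<times> bool) measure \<Rightarrow> nat \<Rightarrow> nat \<Rightarrow> real" where
  "q_w D m i = (if pi_w D m i = 0 then 0
      else (\<integral>z. wt m i (fst z) * of_bool (snd z) \<partial>D) / pi_w D m i)"

definition SCDL_m :: "(real \<times> bool) measure \<Rightarrow> nat \<Rightarrow> real" where
  "SCDL_m D m = Max ((\<lambda>i.
      (\<Sum>j\<in>{0..i}. pi_w D m j * max (q_w D m j - real (i + 1) / real m) 0)
    + (\<Sum>j\<in>{i+1..m}. pi_w D m j * max (real i / real m - q_w D m j) 0)) ` {0..m})"

definition SCDL :: "(real \<times> bool) measure \<Rightarrow> real" where
  "SCDL D = (INF k\<in>{k::nat. 1 \<le> k}. max (SCDL_m D (2 ^ k)) (1 / 2 ^ k))"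

text \<open>Calibration: E[y | p] = p, written via the defining property of conditional
  expectation: for every Borel set A, E[1_A(p) y] = E[1_A(p) p].\<close>
definition calibrated :: "(real \<times> bool) measure \<Rightarrow> bool" where
  "calibrated M \<longleftrightarrow> (\<forall>A\<in>sets borel.
      (\<integral>z. indicator A (fst z) * of_bool (snd z) \<partial>M) =
      (\<integral>z. indicator A (fst z) * fst z \<partial>M))"

definition couplings :: "(real \<times> bool) measure \<Rightarrow> (real \<times> real \<times> bool) measure set" where
  "couplings D = {J. prob_space J \<and> sets J = sets ppy_space \<and>
      (AE z in J. fst z \<in> {0..1} \<and> fst (snd z) \<in> {0..1}) \<and>
      distr J py_space (\<lambda>(p, p', y). (p, y)) = D \<and>
      calibrated (distr J py_space (\<lambda>(p, p', y). (p', y)))}"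

definition DistCal :: "(real \<times> bool) measure \<Rightarrow> real" where
  "DistCal D = (INF J\<in>couplings D. \<integral>z. \<bar>fst z - fst (snd z)\<bar> \<partial>J)"

end

theory Submission
  imports Defs
begin


lemma wt_pos: "wt m j p \<noteq> 0 \<Longrightarrow> \<bar>real m * p - real j\<bar> < 1"
  unfolding wt_def by (auto split: if_splits simp: max_def)

lemma sum_supp_le:
  fixes F :: "int \<Rightarrow> real"
  assumes "finite A" "finite B" "\<And>k. 0 \<le> F k" "\<And>k. k \<notin> B \<Longrightarrow> F k = 0"
  shows "(\<Sum>j\<in>A. F (int j)) \<le> sum F B"
proof -
  have "(\<Sum>j\<in>A. F (int j)) = sum F (int ` A)"
    by (simp add: sum.reindex)
  also have "\<dots> = sum F (int ` A \<inter> B)"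
    using assms by (intro sum.mono_neutral_right) auto
  also have "\<dots> \<le> sum F B"
    using assms by (intro sum_mono2) auto
  finally show ?thesis .
qed

lemma hat_sum_le1:
  fixes u :: real
  assumes that: "finite A"
  shows "(\<Sum>j\<in>A. max (1 - \<bar>u - real j\<bar>) 0) \<le> 1"
proof -
  define n where "n = \<lfloor>u\<rfloor>"
  define F where "F = (\<lambda>k::int. max (1 - \<bar>u - real_of_int k\<bar>) 0)"
  have "(\<Sum>j\<in>A. max (1 - \<bar>u - real j\<bar>) 0) = (\<Sum>j\<in>A. F (int j))"
    unfolding F_def by simp
  also have "\<dots> \<le> sum F {n, n+1}"
  proof (rule sum_supp_le)
    fix k assume "k \<notin> {n, n+1}"
    then have "k \<le> n - 1 \<or> k \<ge> n + 2" by auto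
    moreover have "real_of_int n \<le> u" "u < real_of_int n + 1" unfolding n_def by linarith+
    ultimately have "\<bar>u - real_of_int k\<bar> \<ge> 1"
      by (auto simp: abs_if)
    then show "F k = 0" unfolding F_def by simp
  qed (auto simp: F_def that)
  also have "\<dots> = 1"
  proof -
    have "real_of_int n \<le> u" "u < real_of_int n + 1" unfolding n_def by linarith+
    then show ?thesis unfolding F_def by (simp add: abs_if max_def)
  qed
  finally show ?thesis .
qed

lemma hat_sum_eq1:
  fixes u :: real
  assumes "0 \<le> u" "u \<le> real m"
  shows "(\<Sum>j\<in>{0..m}. max (1 - \<bar>u - real j\<bar>) 0) = 1"
proof -
  define n where "n = nat \<lfloor>u\<rfloor>"
  have n: "real n \<le> u" "u < real n + 1" unfolding n_def using assms by linarith+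
  have nm: "n \<le> m" using n assms by linarith
  show ?thesis
  proof (cases "n = m")
    case True
    then have u: "u = real m" using n assms by linarith
    have "(\<Sum>j\<in>{0..m}. max (1 - \<bar>u - real j\<bar>) 0) = (\<Sum>j\<in>{m}. max (1 - \<bar>u - real j\<bar>) 0)"
      by (rule sum.mono_neutral_right) (auto simp: u abs_if max_def)
    then show ?thesis by (simp add: u)
  next
    case False
    have "(\<Sum>j\<in>{0..m}. max (1 - \<bar>u - real j\<bar>) 0) = (\<Sum>j\<in>{n, n+1}. max (1 - \<bar>u - real j\<bar>) 0)"
    proof (rule sum.mono_neutral_right)
      show "{n, n+1} \<subseteq> {0..m}" using nm False by auto
      show "\<forall>i\<in>{0..m} - {n, n + 1}. max (1 - \<bar>u - real i\<bar>) 0 = 0"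
      proof
        fix i assume "i \<in> {0..m} - {n, n+1}"
        then have "i + 1 \<le> n \<or> i \<ge> n + 2" by auto
        then have "real i + 1 \<le> real n \<or> real i \<ge> real n + 2" by linarith
        then show "max (1 - \<bar>u - real i\<bar>) 0 = 0" using n by (auto simp: abs_if max_def)
      qed
    qed auto
    also have "\<dots> = 1" using n by (simp add: abs_if max_def)
    finally show ?thesis .
  qed
qed

lemma hat_lip_sum:
  fixes u v :: real
  assumes "finite A"
  shows "(\<Sum>j\<in>A. \<bar>max (1 - \<bar>u - real j\<bar>) 0 - max (1 - \<bar>v - real j\<bar>) 0\<bar>) \<le> 3 * \<bar>u - v\<bar>"
proof -
  define H where "H = (\<lambda>w (j::nat). max (1 - \<bar>w - real j\<bar>) 0)"
  have lip: "\<bar>H u j - H v j\<bar> \<le> \<bar>u - v\<bar>" for j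
    unfolding H_def by (auto simp: max_def abs_if)
  show ?thesis
  proof (cases "\<bar>u - v\<bar> \<ge> 1")
    case True
    have "(\<Sum>j\<in>A. \<bar>H u j - H v j\<bar>) \<le> (\<Sum>j\<in>A. H u j + H v j)"
    proof (intro sum_mono)
      fix j have "0 \<le> H u j" "0 \<le> H v j" unfolding H_def by auto
      then show "\<bar>H u j - H v j\<bar> \<le> H u j + H v j" by arith
    qed
    also have "\<dots> = (\<Sum>j\<in>A. H u j) + (\<Sum>j\<in>A. H v j)" by (simp add: sum.distrib)
    also have "\<dots> \<le> 2" using hat_sum_le1[OF assms, of u] hat_sum_le1[OF assms, of v]
      unfolding H_def by linarith
    finally show ?thesis using True unfolding H_def by (smt (verit))
  next
    case False
    define a where "a = min u v"
    define b where "b = max u v"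
    have ab: "a \<le> b" "b < a + 1" "\<bar>u - v\<bar> = b - a" using False unfolding a_def b_def by auto
    define n where "n = \<lfloor>a\<rfloor>"
    have n: "real_of_int n \<le> a" "a < real_of_int n + 1" unfolding n_def by linarith+
    define F where "F = (\<lambda>k::int. \<bar>max (1 - \<bar>u - real_of_int k\<bar>) 0 - max (1 - \<bar>v - real_of_int k\<bar>) 0\<bar>)"
    have "(\<Sum>j\<in>A. \<bar>H u j - H v j\<bar>) = (\<Sum>j\<in>A. F (int j))"
      unfolding F_def H_def by simp
    also have "\<dots> \<le> sum F {n, n+1, n+2}"
    proof (rule sum_supp_le)
      fix k assume k: "k \<notin> {n, n+1, n+2}"
      then have "k \<le> n - 1 \<or> k \<ge> n + 3" by auto
      then have "real_of_int k \<le> real_of_int n - 1 \<or> real_of_int k \<ge> real_of_int n + 3"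
        by (metis of_int_1 of_int_add of_int_diff of_int_le_iff of_int_numeral)
      then have "\<bar>u - real_of_int k\<bar> \<ge> 1 \<and> \<bar>v - real_of_int k\<bar> \<ge> 1"
        using n ab unfolding a_def b_def by (auto simp: abs_if)
      then show "F k = 0" unfolding F_def by simp
    qed (auto simp: F_def assms)
    also have "\<dots> \<le> 3 * \<bar>u - v\<bar>"
    proof -
      have "F k \<le> \<bar>u - v\<bar>" for k unfolding F_def by (auto simp: max_def abs_if)
      then have "sum F {n, n+1, n+2} \<le> F n + F (n+1) + F (n+2)" by simp
      then show ?thesis using \<open>\<And>k. F k \<le> \<bar>u - v\<bar>\<close>[of n] \<open>\<And>k. F k \<le> \<bar>u - v\<bar>\<close>[of "n+1"]
          \<open>\<And>k. F k \<le> \<bar>u - v\<bar>\<close>[of "n+2"] by (smt (verit))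
    qed
    finally show ?thesis unfolding H_def .
  qed
qed

lemma wt_sum_eq1: "m \<ge> 1 \<Longrightarrow> p \<in> {0..1} \<Longrightarrow> (\<Sum>j\<in>{0..m}. wt m j p) = 1"
  unfolding wt_def using hat_sum_eq1[of "real m * p" m]
  by (auto simp: mult_le_cancel_left1)

lemma wt_lip: "(\<Sum>j\<in>{0..m}. \<bar>wt m j x - wt m j y\<bar>) \<le> 3 * real m * \<bar>x - y\<bar>"
  unfolding wt_def using hat_lip_sum[of "{0..m}" "real m * x" "real m * y"]
  by (simp add: right_diff_distrib[symmetric] abs_mult)



lemma tri_sum:
  assumes t: "0 \<le> t" and tN: "real m * t \<le> real N" and m: "m > 0"
  shows "real m * t\<^sup>2 / 4 \<le> (\<Sum>d\<in>{0..N}. max (t - real d / real m) 0)"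
proof -
  define K where "K = nat \<lfloor>real m * t / 2\<rfloor>"
  have nn: "0 \<le> real m * t / 2" using t by simp
  have KK: "real K = real_of_int \<lfloor>real m * t / 2\<rfloor>" unfolding K_def using nn by simp
  have K1: "real K \<le> real m * t / 2" unfolding KK by (rule of_int_floor_le)
  have K2: "real m * t / 2 \<le> real K + 1" unfolding KK by linarith
  have "real K \<le> real N" using K1 tN nn by linarith
  then have KN: "K \<le> N" by simp
  have "real m * t\<^sup>2 / 4 \<le> (real K + 1) * (t / 2)"
    using mult_right_mono[OF K2, of "t/2"] t by (simp add: power2_eq_square)
  also have "\<dots> = (\<Sum>d\<in>{0..K}. t / 2)" by simp
  also have "\<dots> \<le> (\<Sum>d\<in>{0..K}. max (t - real d / real m) 0)"
  proof (intro sum_mono)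
    fix d assume "d \<in> {0..K}"
    then have "real d \<le> real m * t / 2" using K1 by simp
    then have "real d / real m \<le> t / 2" using m by (simp add: field_simps)
    then show "t / 2 \<le> max (t - real d / real m) 0" by linarith
  qed
  also have "\<dots> \<le> (\<Sum>d\<in>{0..N}. max (t - real d / real m) 0)"
    using KN by (intro sum_mono2) auto
  finally show ?thesis .
qed

lemma over_sum:
  assumes m: "m > 0" and q: "q \<le> 1" and j: "j \<le> m"
  shows "real m * (max (q - real (j+1) / real m) 0)\<^sup>2 / 4
     \<le> (\<Sum>i\<in>{j..m}. max (q - real (i+1) / real m) 0)"
proof (cases "q - real (j+1) / real m \<ge> 0")
  case True
  define t where "t = q - real (j+1) / real m"
  have "(\<Sum>i\<in>{j..m}. max (q - real (i+1) / real m) 0)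
      = (\<Sum>d\<in>{0..m-j}. max (q - real (d + j + 1) / real m) 0)"
    using sum.shift_bounds_cl_nat_ivl[of "\<lambda>i. max (q - real (i+1) / real m) 0" 0 j "m-j"] j
    by (simp add: add.commute)
  also have "\<dots> = (\<Sum>d\<in>{0..m-j}. max (t - real d / real m) 0)"
    unfolding t_def by (intro sum.cong) (auto simp: add_divide_distrib diff_divide_distrib)
  also have "\<dots> \<ge> real m * t\<^sup>2 / 4"
  proof (rule tri_sum)
    show "0 \<le> t" using True t_def by simp
    have "real m * t = real m * q - real (j+1)" unfolding t_def using m by (simp add: right_diff_distrib)
    also have "\<dots> \<le> real m - real j - 1" using q m by simp
    finally show "real m * t \<le> real (m - j)" using j by simp
  qed (use m in auto)
  finally show ?thesis using True unfolding t_def by simp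
next
  case False
  then show ?thesis by (auto intro!: sum_nonneg)
qed

lemma under_sum:
  assumes m: "m > 0" and q: "0 \<le> q"
  shows "real m * (max ((real j - 1) / real m - q) 0)\<^sup>2 / 4
     \<le> (\<Sum>i\<in>{0..<j}. max (real i / real m - q) 0)"
proof (cases "(real j - 1) / real m - q \<ge> 0 \<and> j > 0")
  case True
  then obtain J where J: "j = Suc J" by (cases j) auto
  define t where "t = (real j - 1) / real m - q"
  have "(\<Sum>i\<in>{0..<j}. max (real i / real m - q) 0) = (\<Sum>i\<in>{0..J}. max (real i / real m - q) 0)"
    using J atLeastLessThanSuc_atLeastAtMost by simp
  also have "\<dots> = (\<Sum>d\<in>{0..J}. max (real (J - d) / real m - q) 0)"
    by (subst sum.atLeastAtMost_rev) simp
  also have "\<dots> = (\<Sum>d\<in>{0..J}. max (t - real d / real m) 0)"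
    unfolding t_def J by (intro sum.cong) (auto simp: of_nat_diff diff_divide_distrib)
  also have "\<dots> \<ge> real m * t\<^sup>2 / 4"
  proof (rule tri_sum)
    show "0 \<le> t" using True t_def by simp
    have "real m * t = real J - real m * q" unfolding t_def J using m by (simp add: right_diff_distrib)
    also have "\<dots> \<le> real J" using q m by simp
    finally show "real m * t \<le> real J" .
  qed (use m in auto)
  finally show ?thesis using True unfolding t_def by simp
next
  case False
  then have "max ((real j - 1) / real m - q) 0 = 0"
    using q m by (auto simp: max_def field_simps)
  then show ?thesis by (auto intro!: sum_nonneg)
qed

lemma swap1:
  fixes a :: "nat \<Rightarrow> nat \<Rightarrow> real"
  shows "(\<Sum>i\<in>{0..m}. \<Sum>j\<in>{0..i}. a i j) = (\<Sum>j\<in>{0..m}. \<Sum>i\<in>{j..m}. a i j)"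
proof -
  have "(\<Sum>i\<in>{0..m}. \<Sum>j\<in>{0..i}. a i j) = (\<Sum>i\<in>{0..m}. \<Sum>j\<in>{0..m}. if j \<le> i then a i j else 0)"
  proof (rule sum.cong[OF refl])
    fix i assume "i \<in> {0..m}"
    then have e: "{0..i} = {j\<in>{0..m}. j \<le> i}" by auto
    show "(\<Sum>j\<in>{0..i}. a i j) = (\<Sum>j\<in>{0..m}. if j \<le> i then a i j else 0)"
      using e sum.inter_filter[of "{0..m}" "a i" "\<lambda>j. j \<le> i"] by simp
  qed
  also have "\<dots> = (\<Sum>j\<in>{0..m}. \<Sum>i\<in>{0..m}. if j \<le> i then a i j else 0)" by (rule sum.swap)
  also have "\<dots> = (\<Sum>j\<in>{0..m}. \<Sum>i\<in>{j..m}. a i j)"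
  proof (rule sum.cong[OF refl])
    fix j assume "j \<in> {0..m}"
    have e: "{j..m} = {i\<in>{0..m}. j \<le> i}" by auto
    show "(\<Sum>i\<in>{0..m}. if j \<le> i then a i j else 0) = (\<Sum>i\<in>{j..m}. a i j)"
      using e sum.inter_filter[of "{0..m}" "\<lambda>i. a i j" "\<lambda>i. j \<le> i"] by simp
  qed
  finally show ?thesis .
qed

lemma swap2:
  fixes a :: "nat \<Rightarrow> nat \<Rightarrow> real"
  shows "(\<Sum>i\<in>{0..m}. \<Sum>j\<in>{i+1..m}. a i j) = (\<Sum>j\<in>{0..m}. \<Sum>i\<in>{0..<j}. a i j)"
proof -
  have "(\<Sum>i\<in>{0..m}. \<Sum>j\<in>{i+1..m}. a i j) = (\<Sum>i\<in>{0..m}. \<Sum>j\<in>{0..m}. if i < j then a i j else 0)"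
  proof (rule sum.cong[OF refl])
    fix i assume "i \<in> {0..m}"
    have e: "{i+1..m} = {j\<in>{0..m}. i < j}" by auto
    show "(\<Sum>j\<in>{i+1..m}. a i j) = (\<Sum>j\<in>{0..m}. if i < j then a i j else 0)"
      using e sum.inter_filter[of "{0..m}" "a i" "\<lambda>j. i < j"] by simp
  qed
  also have "\<dots> = (\<Sum>j\<in>{0..m}. \<Sum>i\<in>{0..m}. if i < j then a i j else 0)" by (rule sum.swap)
  also have "\<dots> = (\<Sum>j\<in>{0..m}. \<Sum>i\<in>{0..<j}. a i j)"
  proof (rule sum.cong[OF refl])
    fix j assume "j \<in> {0..m}"
    then have e: "{0..<j} = {i\<in>{0..m}. i < j}" by auto
    show "(\<Sum>i\<in>{0..m}. if i < j then a i j else 0) = (\<Sum>i\<in>{0..<j}. a i j)"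
      using e sum.inter_filter[of "{0..m}" "\<lambda>i. a i j" "\<lambda>i. i < j"] by simp
  qed
  finally show ?thesis .
qed

lemma core:
  fixes pi q :: "nat \<Rightarrow> real"
  assumes m: "m > 0" and pi: "\<And>j. 0 \<le> pi j" and q0: "\<And>j. 0 \<le> q j" and q1: "\<And>j. q j \<le> 1"
  defines "T \<equiv> \<lambda>i. (\<Sum>j\<in>{0..i}. pi j * max (q j - real (i+1) / real m) 0)
        + (\<Sum>j\<in>{i+1..m}. pi j * max (real i / real m - q j) 0)"
  shows "(\<Sum>j\<in>{0..m}. pi j * ((max (q j - real (j+1) / real m) 0)\<^sup>2
           + (max ((real j - 1) / real m - q j) 0)\<^sup>2)) \<le> 8 * Max (T ` {0..m})"
proof -
  define S where "S = Max (T ` {0..m})"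
  have TS: "T i \<le> S" if "i \<in> {0..m}" for i
    unfolding S_def using that by (intro Max_ge) auto
  have T0: "0 \<le> T i" for i
    unfolding T_def using pi by (intro add_nonneg_nonneg sum_nonneg mult_nonneg_nonneg) auto
  have S0: "0 \<le> S" using TS[of 0] T0[of 0] by simp
  have "(\<Sum>i\<in>{0..m}. T i) \<le> of_nat (card {0..m}) * S"
    by (rule sum_bounded_above) (use TS in auto)
  also have "\<dots> = (real m + 1) * S" by simp
  also have "\<dots> \<le> (2 * real m) * S" using m S0 by (intro mult_right_mono) auto
  finally have sumT: "(\<Sum>i\<in>{0..m}. T i) \<le> 2 * real m * S" .
  have "(\<Sum>i\<in>{0..m}. T i) = (\<Sum>i\<in>{0..m}. \<Sum>j\<in>{0..i}. pi j * max (q j - real (i+1) / real m) 0)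
      + (\<Sum>i\<in>{0..m}. \<Sum>j\<in>{i+1..m}. pi j * max (real i / real m - q j) 0)"
    unfolding T_def by (simp add: sum.distrib)
  also have "\<dots> = (\<Sum>j\<in>{0..m}. pi j * (\<Sum>i\<in>{j..m}. max (q j - real (i+1) / real m) 0))
      + (\<Sum>j\<in>{0..m}. pi j * (\<Sum>i\<in>{0..<j}. max (real i / real m - q j) 0))"
    unfolding swap1 swap2 by (simp add: sum_distrib_left)
  also have "\<dots> = (\<Sum>j\<in>{0..m}. pi j * ((\<Sum>i\<in>{j..m}. max (q j - real (i+1) / real m) 0)
      + (\<Sum>i\<in>{0..<j}. max (real i / real m - q j) 0)))"
    by (simp add: sum.distrib distrib_left)
  finally have eqT: "(\<Sum>i\<in>{0..m}. T i) = \<dots>" .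
  have "(\<Sum>j\<in>{0..m}. pi j * (real m * ((max (q j - real (j+1) / real m) 0)\<^sup>2
           + (max ((real j - 1) / real m - q j) 0)\<^sup>2) / 4)) \<le> (\<Sum>i\<in>{0..m}. T i)"
    unfolding eqT
  proof (intro sum_mono mult_left_mono)
    fix j assume j: "j \<in> {0..m}"
    show "real m * ((max (q j - real (j+1) / real m) 0)\<^sup>2 + (max ((real j - 1) / real m - q j) 0)\<^sup>2) / 4
      \<le> (\<Sum>i\<in>{j..m}. max (q j - real (i+1) / real m) 0) + (\<Sum>i\<in>{0..<j}. max (real i / real m - q j) 0)"
      using over_sum[OF m q1[of j], of j] under_sum[OF m q0[of j], of j] j
      by (simp add: distrib_left add_divide_distrib)
  qed (use pi in auto)
  also have "(\<Sum>j\<in>{0..m}. pi j * (real m * ((max (q j - real (j+1) / real m) 0)\<^sup>2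
           + (max ((real j - 1) / real m - q j) 0)\<^sup>2) / 4))
     = real m / 4 * (\<Sum>j\<in>{0..m}. pi j * ((max (q j - real (j+1) / real m) 0)\<^sup>2
           + (max ((real j - 1) / real m - q j) 0)\<^sup>2))"
    by (subst sum_distrib_left) (rule sum.cong; simp add: algebra_simps)
  finally have "real m / 4 * (\<Sum>j\<in>{0..m}. pi j * ((max (q j - real (j+1) / real m) 0)\<^sup>2
           + (max ((real j - 1) / real m - q j) 0)\<^sup>2)) \<le> 2 * real m * S"
    using sumT by linarith
  then show ?thesis unfolding S_def[symmetric] using m
    by (simp add: field_simps)
qed



lemma isd:
  assumes "is_dist D"
  shows "prob_space D" "sets D = sets py_space" "AE z in D. fst z \<in> {0..1}" "space D = UNIV"
  using assms unfolding is_dist_def apply auto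
  using sets_eq_imp_space_eq[of D py_space] by (auto simp: py_space_def space_pair_measure)

lemma meas_D: "is_dist D \<Longrightarrow> f \<in> measurable py_space M \<Longrightarrow> f \<in> measurable D M"
  using isd(2) measurable_cong_sets by blast

lemma space_ppy: "space ppy_space = UNIV"
  by (simp add: ppy_space_def space_pair_measure)

definition mixJ :: "(real \<times> bool) measure \<Rightarrow> nat \<Rightarrow> (real \<times> real \<times> bool) measure" where
  "mixJ D m = distr (density (D \<Otimes>\<^sub>M count_space {0..m})
       (\<lambda>x. ennreal (wt m (snd x) (fst (fst x))))) ppy_space
       (\<lambda>x. (fst (fst x), q_w D m (snd x), snd (fst x)))"

lemma wt_meas[measurable]: "wt m j \<in> borel_measurable borel"
  unfolding wt_def by measurable

lemma mix_nn:
  assumes D: "is_dist D" and h: "h \<in> borel_measurable ppy_space"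
  shows "(\<integral>\<^sup>+ x. h x \<partial>(mixJ D m)) =
    (\<integral>\<^sup>+ z. (\<Sum>j\<in>{0..m}. ennreal (wt m j (fst z)) * h (fst z, q_w D m j, snd z)) \<partial>D)"
proof -
  let ?C = "count_space {0..m} :: nat measure"
  let ?P = "D \<Otimes>\<^sub>M ?C"
  let ?f = "\<lambda>x. ennreal (wt m (snd x) (fst (fst x)))"
  let ?g = "\<lambda>x::(real \<times> bool) \<times> nat. (fst (fst x), q_w D m (snd x), snd (fst x))"
  interpret C: sigma_finite_measure ?C by (rule sigma_finite_measure_count_space_finite) simp
  have sP: "sets ?P = sets (py_space \<Otimes>\<^sub>M ?C)"
    using isd(2)[OF D] by (intro sets_pair_measure_cong) auto
  have fst_fst: "(\<lambda>x. fst (fst x)) \<in> borel_measurable ?P"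
    unfolding measurable_cong_sets[OF sP refl] py_space_def by measurable
  have snd_fst: "(\<lambda>x. snd (fst x)) \<in> measurable ?P (count_space UNIV)"
    unfolding measurable_cong_sets[OF sP refl] py_space_def by measurable
  have qm: "(\<lambda>x. q_w D m (snd x)) \<in> borel_measurable ?P"
    by (rule measurable_compose[OF measurable_snd]) simp
  have gm: "?g \<in> measurable ?P ppy_space"
    unfolding ppy_space_def using fst_fst snd_fst qm by measurable
  have fm: "?f \<in> borel_measurable ?P"
  proof -
    have "(\<lambda>x. (\<lambda>j x. ennreal (wt m j (fst (fst x)))) (snd x) x) \<in> borel_measurable ?P"
      by (rule measurable_compose_countable'[where I="{0..m}"]) (use fst_fst in auto)
    then show ?thesis by simp
  qed
  have "(\<integral>\<^sup>+ x. h x \<partial>(mixJ D m)) = (\<integral>\<^sup>+ x. h (?g x) \<partial>(density ?P ?f))"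
    unfolding mixJ_def by (rule nn_integral_distr) (use gm h in auto)
  also have "\<dots> = (\<integral>\<^sup>+ x. ?f x * h (?g x) \<partial>?P)"
    by (rule nn_integral_density) (use fm gm h in auto)
  also have "\<dots> = (\<integral>\<^sup>+ z. \<integral>\<^sup>+ j. ?f (z, j) * h (?g (z, j)) \<partial>?C \<partial>D)"
    by (rule C.nn_integral_fst[symmetric]) (use fm gm h in auto)
  also have "\<dots> = (\<integral>\<^sup>+ z. (\<Sum>j\<in>{0..m}. ennreal (wt m j (fst z)) * h (fst z, q_w D m j, snd z)) \<partial>D)"
    by (intro nn_integral_cong) (simp add: nn_integral_count_space_finite)
  finally show ?thesis .
qed

lemma int_bdd:
  fixes f :: "'a \<Rightarrow> real"
  assumes "prob_space M" "f \<in> borel_measurable M" "AE x in M. \<bar>f x\<bar> \<le> B"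
  shows "integrable M f"
proof -
  interpret prob_space M by fact
  show ?thesis by (rule integrable_const_bound[where B=B]) (use assms in auto)
qed

lemma wtY_meas: "(\<lambda>z. wt m j (fst z) * of_bool (snd z)) \<in> borel_measurable py_space"
  unfolding py_space_def by measurable

lemma wt_fst_meas: "(\<lambda>z. wt m j (fst z)) \<in> borel_measurable py_space"
  unfolding py_space_def by measurable

lemma wt_nonneg: "0 \<le> wt m j p" unfolding wt_def by simp
lemma wt_le1: "wt m j p \<le> 1" unfolding wt_def by simp

lemma int_D:
  fixes f :: "real \<times> bool \<Rightarrow> real"
  assumes "is_dist D" "f \<in> borel_measurable py_space" "\<And>z. \<bar>f z\<bar> \<le> B"
  shows "integrable D f"
  apply (rule int_bdd[of _ _ B])
  using assms isd(1) meas_D by auto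

lemma pi_nonneg: "is_dist D \<Longrightarrow> 0 \<le> pi_w D m j"
  unfolding pi_w_def by (intro integral_nonneg_AE) (simp add: wt_nonneg)

lemma int_wY_le:
  assumes D: "is_dist D"
  shows "0 \<le> (\<integral>z. wt m j (fst z) * of_bool (snd z) \<partial>D)"
    "(\<integral>z. wt m j (fst z) * of_bool (snd z) \<partial>D) \<le> pi_w D m j"
proof -
  note P = isd(1)[OF D]
  show "0 \<le> (\<integral>z. wt m j (fst z) * of_bool (snd z) \<partial>D)"
    by (intro integral_nonneg_AE) (simp add: wt_nonneg)
  show "(\<integral>z. wt m j (fst z) * of_bool (snd z) \<partial>D) \<le> pi_w D m j"
    unfolding pi_w_def
  proof (rule integral_mono)
    show "integrable D (\<lambda>z. wt m j (fst z) * of_bool (snd z))"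
      by (rule int_D[OF D wtY_meas, where B=1]) (simp add: wt_nonneg wt_le1)
    show "integrable D (\<lambda>z. wt m j (fst z))"
      by (rule int_D[OF D wt_fst_meas, where B=1]) (simp add: wt_nonneg wt_le1)
  qed (simp add: wt_nonneg)
qed

lemma piq:
  assumes D: "is_dist D"
  shows "pi_w D m j * q_w D m j = (\<integral>z. wt m j (fst z) * of_bool (snd z) \<partial>D)"
  using int_wY_le[OF D, of m j] unfolding q_w_def by auto

lemma q_range:
  assumes D: "is_dist D"
  shows "0 \<le> q_w D m j" "q_w D m j \<le> 1"
  using int_wY_le[OF D, of m j] pi_nonneg[OF D, of m j] unfolding q_w_def
  by (auto simp: divide_le_eq_1)

lemma sum_pi:
  assumes D: "is_dist D" and m: "m \<ge> 1"
  shows "(\<Sum>j\<in>{0..m}. pi_w D m j) = 1"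
proof -
  note P = isd(1)[OF D]
  have "(\<Sum>j\<in>{0..m}. pi_w D m j) = (\<integral>z. (\<Sum>j\<in>{0..m}. wt m j (fst z)) \<partial>D)"
    unfolding pi_w_def
    by (rule Bochner_Integration.integral_sum[symmetric])
       (rule int_D[OF D wt_fst_meas, where B=1]; simp add: wt_nonneg wt_le1)
  also have "\<dots> = (\<integral>z. 1 \<partial>D)"
    by (rule integral_cong_AE) (use isd(3)[OF D] meas_D[OF D wt_fst_meas] wt_sum_eq1[OF m] in auto)
  also have "\<dots> = 1" using prob_space.prob_space[OF P] by simp
  finally show ?thesis .
qed

lemma mix_AE:
  assumes D: "is_dist D" and Ps: "{x \<in> space ppy_space. \<not> P x} \<in> sets ppy_space"
    and ae: "AE z in D. \<forall>j\<in>{0..m}. P (fst z, q_w D m j, snd z)"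
  shows "AE x in mixJ D m. P x"
proof -
  have sp: "space (mixJ D m) = space ppy_space" "sets (mixJ D m) = sets ppy_space"
    unfolding mixJ_def by auto
  have "emeasure (mixJ D m) {x \<in> space ppy_space. \<not> P x}
      = (\<integral>\<^sup>+ x. indicator {x \<in> space ppy_space. \<not> P x} x \<partial>(mixJ D m))"
    using Ps sp by (simp add: nn_integral_indicator)
  also have "\<dots> = (\<integral>\<^sup>+ z. (\<Sum>j\<in>{0..m}. ennreal (wt m j (fst z)) *
        indicator {x \<in> space ppy_space. \<not> P x} (fst z, q_w D m j, snd z)) \<partial>D)"
    by (rule mix_nn[OF D]) (use Ps in \<open>simp add: borel_measurable_indicator\<close>)
  also have "\<dots> = (\<integral>\<^sup>+ z. 0 \<partial>D)"
    by (rule nn_integral_cong_AE) (use ae in \<open>auto simp: space_ppy\<close>)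
  finally have "emeasure (mixJ D m) {x \<in> space ppy_space. \<not> P x} = 0" by simp
  then show ?thesis
    using AE_iff_measurable[of "{x \<in> space ppy_space. \<not> P x}" "mixJ D m" P] Ps sp by auto
qed

lemma mix_prob:
  assumes D: "is_dist D" and m: "m \<ge> 1"
  shows "prob_space (mixJ D m)"
proof
  have "emeasure (mixJ D m) (space (mixJ D m)) = (\<integral>\<^sup>+ x. 1 \<partial>(mixJ D m))"
    by simp
  also have "\<dots> = (\<integral>\<^sup>+ z. (\<Sum>j\<in>{0..m}. ennreal (wt m j (fst z)) * 1) \<partial>D)"
    by (rule mix_nn[OF D]) simp
  also have "\<dots> = (\<integral>\<^sup>+ z. 1 \<partial>D)"
    by (rule nn_integral_cong_AE) (use isd(3)[OF D] wt_sum_eq1[OF m] in \<open>auto simp: wt_nonneg\<close>)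
  also have "\<dots> = 1" using prob_space.emeasure_space_1[OF isd(1)[OF D]] by simp
  finally show "emeasure (mixJ D m) (space (mixJ D m)) = 1" .
qed



lemma pr1_eq: "(\<lambda>(p, p', y). (p, y)) = (\<lambda>x::real \<times> real \<times> bool. (fst x, snd (snd x)))"
  by (auto simp: fun_eq_iff split: prod.splits)
lemma pr2_eq: "(\<lambda>(p, p', y). (p', y)) = (\<lambda>x::real \<times> real \<times> bool. (fst (snd x), snd (snd x)))"
  by (auto simp: fun_eq_iff split: prod.splits)
lemma pr1_meas: "(\<lambda>x::real \<times> real \<times> bool. (fst x, snd (snd x))) \<in> measurable ppy_space py_space"
  unfolding ppy_space_def py_space_def by measurable
lemma pr2_meas: "(\<lambda>x::real \<times> real \<times> bool. (fst (snd x), snd (snd x))) \<in> measurable ppy_space py_space"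
  unfolding ppy_space_def py_space_def by measurable

lemma mix_sets: "sets (mixJ D m) = sets ppy_space" "space (mixJ D m) = space ppy_space"
  unfolding mixJ_def by auto

lemma mix_int:
  assumes D: "is_dist D" and H: "H \<in> borel_measurable ppy_space"
    and Hnn: "\<And>p q y. p \<in> {0..1} \<Longrightarrow> q \<in> {0..1} \<Longrightarrow> 0 \<le> H (p, q, y)"
  shows "(\<integral>x. H x \<partial>mixJ D m) = (\<integral>z. (\<Sum>j\<in>{0..m}. wt m j (fst z) * H (fst z, q_w D m j, snd z)) \<partial>D)"
proof -
  have Hm[measurable]: "H \<in> borel_measurable (borel \<Otimes>\<^sub>M (borel \<Otimes>\<^sub>M count_space UNIV))"
    using H unfolding ppy_space_def .
  have HJ: "H \<in> borel_measurable (mixJ D m)"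
    using H measurable_cong_sets[OF mix_sets(1) refl] by blast
  have aeD: "AE z in D. \<forall>j\<in>{0..m}. 0 \<le> H (fst z, q_w D m j, snd z)"
    using isd(3)[OF D] by eventually_elim (auto intro!: Hnn simp: q_range[OF D])
  have aeJ: "AE x in mixJ D m. 0 \<le> H x"
    by (rule mix_AE[OF D _ aeD]) (use H in \<open>simp add: ppy_space_def\<close>)
  have RM: "(\<lambda>z. \<Sum>j\<in>{0..m}. wt m j (fst z) * H (fst z, q_w D m j, snd z)) \<in> borel_measurable D"
    by (rule meas_D[OF D]) (unfold py_space_def, measurable)
  have "(\<integral>x. H x \<partial>mixJ D m) = enn2real (\<integral>\<^sup>+ x. ennreal (H x) \<partial>mixJ D m)"
    by (rule integral_eq_nn_integral[OF HJ aeJ])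
  also have "(\<integral>\<^sup>+ x. ennreal (H x) \<partial>mixJ D m)
     = (\<integral>\<^sup>+ z. (\<Sum>j\<in>{0..m}. ennreal (wt m j (fst z)) * ennreal (H (fst z, q_w D m j, snd z))) \<partial>D)"
    by (rule mix_nn[OF D]) (use H in simp)
  also have "\<dots> = (\<integral>\<^sup>+ z. ennreal (\<Sum>j\<in>{0..m}. wt m j (fst z) * H (fst z, q_w D m j, snd z)) \<partial>D)"
  proof (rule nn_integral_cong_AE)
    show "AE z in D. (\<Sum>j\<in>{0..m}. ennreal (wt m j (fst z)) * ennreal (H (fst z, q_w D m j, snd z)))
        = ennreal (\<Sum>j\<in>{0..m}. wt m j (fst z) * H (fst z, q_w D m j, snd z))"
      using aeD
    proof eventually_elim
      case (elim z)
      have "(\<Sum>j\<in>{0..m}. ennreal (wt m j (fst z)) * ennreal (H (fst z, q_w D m j, snd z)))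
          = (\<Sum>j\<in>{0..m}. ennreal (wt m j (fst z) * H (fst z, q_w D m j, snd z)))"
        by (rule sum.cong) (use elim in \<open>auto simp: ennreal_mult wt_nonneg\<close>)
      also have "\<dots> = ennreal (\<Sum>j\<in>{0..m}. wt m j (fst z) * H (fst z, q_w D m j, snd z))"
        by (rule sum_ennreal) (use elim in \<open>auto simp: wt_nonneg\<close>)
      finally show ?case .
    qed
  qed
  also have "enn2real \<dots> = (\<integral>z. (\<Sum>j\<in>{0..m}. wt m j (fst z) * H (fst z, q_w D m j, snd z)) \<partial>D)"
    by (rule integral_eq_nn_integral[symmetric, OF RM]) 
       (use aeD in \<open>eventually_elim, auto intro!: sum_nonneg simp: wt_nonneg\<close>)
  finally show ?thesis .
qed


lemma int_sum_w:
  assumes D: "is_dist D"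
  shows "(\<integral>z. (\<Sum>j\<in>{0..m}. wt m j (fst z) * c j) \<partial>D) = (\<Sum>j\<in>{0..m}. c j * pi_w D m j)"
proof -
  have "(\<integral>z. (\<Sum>j\<in>{0..m}. wt m j (fst z) * c j) \<partial>D) = (\<Sum>j\<in>{0..m}. (\<integral>z. wt m j (fst z) * c j \<partial>D))"
    by (rule Bochner_Integration.integral_sum) (intro integrable_mult_left int_D[OF D wt_fst_meas, where B=1]; simp add: wt_nonneg wt_le1)
  then show ?thesis unfolding pi_w_def by (simp add: mult.commute)
qed

lemma int_sum_wY:
  assumes D: "is_dist D"
  shows "(\<integral>z. (\<Sum>j\<in>{0..m}. wt m j (fst z) * (c j * of_bool (snd z))) \<partial>D)
     = (\<Sum>j\<in>{0..m}. c j * (pi_w D m j * q_w D m j))"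
proof -
  have e: "wt m j (fst z) * (c j * of_bool (snd z)) = c j * (wt m j (fst z) * of_bool (snd z))" for j z
    by simp
  have "(\<integral>z. (\<Sum>j\<in>{0..m}. wt m j (fst z) * (c j * of_bool (snd z))) \<partial>D)
     = (\<Sum>j\<in>{0..m}. (\<integral>z. c j * (wt m j (fst z) * of_bool (snd z)) \<partial>D))"
    unfolding e
    by (rule Bochner_Integration.integral_sum) (intro integrable_mult_right int_D[OF D wtY_meas, where B=1]; simp add: wt_nonneg wt_le1)
  then show ?thesis by (simp add: piq[OF D])
qed

lemma mix_marg:
  assumes D: "is_dist D" and m: "m \<ge> 1"
  shows "distr (mixJ D m) py_space (\<lambda>(p, p', y). (p, y)) = D"
  unfolding pr1_eq
proof (rule measure_eqI)
  show "sets (distr (mixJ D m) py_space (\<lambda>x. (fst x, snd (snd x)))) = sets D"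
    using isd(2)[OF D] by simp
  fix A assume A: "A \<in> sets (distr (mixJ D m) py_space (\<lambda>x. (fst x, snd (snd x))))"
  then have A': "A \<in> sets py_space" by simp
  have pm: "(\<lambda>x. (fst x, snd (snd x))) \<in> measurable (mixJ D m) py_space"
    using pr1_meas measurable_cong_sets[OF mix_sets(1) refl] by blast
  let ?S = "(\<lambda>x. (fst x, snd (snd x))) -` A \<inter> space ppy_space"
  have S: "?S \<in> sets ppy_space" using pr1_meas A' by (rule measurable_sets)
  have "emeasure (distr (mixJ D m) py_space (\<lambda>x. (fst x, snd (snd x)))) A
      = emeasure (mixJ D m) ?S"
    by (subst emeasure_distr[OF pm A']) (simp add: mix_sets)
  also have "\<dots> = (\<integral>\<^sup>+ x. indicator ?S x \<partial>mixJ D m)"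
    using S by (simp add: mix_sets)
  also have "\<dots> = (\<integral>\<^sup>+ z. (\<Sum>j\<in>{0..m}. ennreal (wt m j (fst z)) * indicator ?S (fst z, q_w D m j, snd z)) \<partial>D)"
    by (rule mix_nn[OF D]) (use S in simp)
  also have "\<dots> = (\<integral>\<^sup>+ z. indicator A z \<partial>D)"
  proof (rule nn_integral_cong_AE)
    show "AE z in D. (\<Sum>j\<in>{0..m}. ennreal (wt m j (fst z)) * indicator ?S (fst z, q_w D m j, snd z)) = indicator A z"
      using isd(3)[OF D]
    proof eventually_elim
      case (elim z)
      have "(\<Sum>j\<in>{0..m}. ennreal (wt m j (fst z)) * indicator ?S (fst z, q_w D m j, snd z))
          = (\<Sum>j\<in>{0..m}. ennreal (wt m j (fst z))) * indicator A z"
        by (simp add: sum_distrib_right space_ppy indicator_def)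
      also have "(\<Sum>j\<in>{0..m}. ennreal (wt m j (fst z))) = 1"
        using wt_sum_eq1[OF m elim] by (simp add: wt_nonneg)
      finally show ?case by simp
    qed
  qed
  also have "\<dots> = emeasure D A"
    using A' isd(2)[OF D] by simp
  finally show "emeasure (distr (mixJ D m) py_space (\<lambda>x. (fst x, snd (snd x)))) A = emeasure D A" .
qed

lemma mix_cal:
  assumes D: "is_dist D"
  shows "calibrated (distr (mixJ D m) py_space (\<lambda>(p, p', y). (p', y)))"
  unfolding calibrated_def pr2_eq
proof
  fix A :: "real set" assume A: "A \<in> sets borel"
  have pm: "(\<lambda>x. (fst (snd x), snd (snd x))) \<in> measurable (mixJ D m) py_space"
    using pr2_meas measurable_cong_sets[OF mix_sets(1) refl] by blast
  have [measurable]: "A \<in> sets borel" by fact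
  have f1: "(\<lambda>z. indicator A (fst z) * of_bool (snd z) :: real) \<in> borel_measurable py_space"
    unfolding py_space_def by measurable
  have f2: "(\<lambda>z. indicator A (fst z) * fst z :: real) \<in> borel_measurable py_space"
    unfolding py_space_def by measurable
  have "(\<integral>z. (indicator A (fst z) * of_bool (snd z) :: real) \<partial>distr (mixJ D m) py_space (\<lambda>x. (fst (snd x), snd (snd x))))
      = (\<integral>x. (indicator A (fst (snd x)) * of_bool (snd (snd x)) :: real) \<partial>mixJ D m)"
    using integral_distr[OF pm f1] by simp
  also have "\<dots> = (\<integral>z. (\<Sum>j\<in>{0..m}. wt m j (fst z) * (indicator A (q_w D m j) * of_bool (snd z))) \<partial>D)"
  proof -
    have m1: "(\<lambda>x. (indicator A (fst (snd x)) * of_bool (snd (snd x)) :: real)) \<in> borel_measurable ppy_space"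
      unfolding ppy_space_def by measurable
    show ?thesis using mix_int[OF D m1] by simp
  qed
  also have "\<dots> = (\<Sum>j\<in>{0..m}. indicator A (q_w D m j) * (pi_w D m j * q_w D m j))"
    by (rule int_sum_wY[OF D])
  also have "\<dots> = (\<integral>z. (\<Sum>j\<in>{0..m}. wt m j (fst z) * (indicator A (q_w D m j) * q_w D m j)) \<partial>D)"
    by (subst int_sum_w[OF D]) (simp add: mult_ac)
  also have "\<dots> = (\<integral>x. (indicator A (fst (snd x)) * fst (snd x) :: real) \<partial>mixJ D m)"
  proof -
    have m1: "(\<lambda>x. (indicator A (fst (snd x)) * fst (snd x) :: real)) \<in> borel_measurable ppy_space"
      unfolding ppy_space_def by measurable
    show ?thesis using mix_int[OF D m1] by simp
  qed
  also have "\<dots> = (\<integral>z. (indicator A (fst z) * fst z :: real) \<partial>distr (mixJ D m) py_space (\<lambda>x. (fst (snd x), snd (snd x))))"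
    using integral_distr[OF pm f2] by simp
  finally show "(\<integral>z. (indicator A (fst z) * of_bool (snd z) :: real) \<partial>distr (mixJ D m) py_space (\<lambda>x. (fst (snd x), snd (snd x))))
      = (\<integral>z. (indicator A (fst z) * fst z :: real) \<partial>distr (mixJ D m) py_space (\<lambda>x. (fst (snd x), snd (snd x))))" .
qed


lemma int_sum_w_integrable:
  assumes D: "is_dist D"
  shows "integrable D (\<lambda>z. \<Sum>j\<in>{0..m}. wt m j (fst z) * c j)"
  by (rule Bochner_Integration.integrable_sum, rule Bochner_Integration.integrable_mult_left, rule int_D[OF D wt_fst_meas, where B=1]) (simp add: wt_nonneg wt_le1)

lemma mix_absint:
  assumes D: "is_dist D"
  shows "(\<integral>x. \<bar>fst x - fst (snd x)\<bar> \<partial>mixJ D m)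
     = (\<integral>z. (\<Sum>j\<in>{0..m}. wt m j (fst z) * \<bar>fst z - q_w D m j\<bar>) \<partial>D)"
proof -
  have m1: "(\<lambda>x::real \<times> real \<times> bool. \<bar>fst x - fst (snd x)\<bar>) \<in> borel_measurable ppy_space"
    unfolding ppy_space_def by measurable
  show ?thesis using mix_int[OF D m1] by simp
qed

lemma mix_dist:
  assumes D: "is_dist D" and m: "m \<ge> 1"
  shows "(\<integral>x. \<bar>fst x - fst (snd x)\<bar> \<partial>mixJ D m)
      \<le> 1 / real m + (\<Sum>j\<in>{0..m}. pi_w D m j * \<bar>q_w D m j - real j / real m\<bar>)"
    "(\<integral>x. \<bar>fst x - fst (snd x)\<bar> \<partial>mixJ D m) \<le> 1"
proof -
  have "(\<integral>z. (\<Sum>j\<in>{0..m}. wt m j (fst z) * \<bar>fst z - q_w D m j\<bar>) \<partial>D)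
      \<le> (\<integral>z. (\<Sum>j\<in>{0..m}. wt m j (fst z) * (1 / real m + \<bar>q_w D m j - real j / real m\<bar>)) \<partial>D)"
  proof (rule integral_mono_AE')
    show "integrable D (\<lambda>z. \<Sum>j\<in>{0..m}. wt m j (fst z) * (1 / real m + \<bar>q_w D m j - real j / real m\<bar>))"
      by (rule int_sum_w_integrable[OF D])
    show "AE z in D. 0 \<le> (\<Sum>j\<in>{0..m}. wt m j (fst z) * (1 / real m + \<bar>q_w D m j - real j / real m\<bar>))"
      by (intro AE_I2 sum_nonneg mult_nonneg_nonneg) (auto simp: wt_nonneg)
    show "AE z in D. (\<Sum>j\<in>{0..m}. wt m j (fst z) * \<bar>fst z - q_w D m j\<bar>)
       \<le> (\<Sum>j\<in>{0..m}. wt m j (fst z) * (1 / real m + \<bar>q_w D m j - real j / real m\<bar>))"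
    proof (intro AE_I2 sum_mono)
      fix z :: "real \<times> bool" and j
      show "wt m j (fst z) * \<bar>fst z - q_w D m j\<bar> \<le> wt m j (fst z) * (1 / real m + \<bar>q_w D m j - real j / real m\<bar>)"
      proof (cases "wt m j (fst z) = 0")
        case False
        then have "\<bar>real m * fst z - real j\<bar> < 1" by (rule wt_pos)
        then have "\<bar>fst z - real j / real m\<bar> \<le> 1 / real m" using m
          by (simp add: field_simps abs_less_iff abs_le_iff)
        then have "\<bar>fst z - q_w D m j\<bar> \<le> 1 / real m + \<bar>q_w D m j - real j / real m\<bar>" by linarith
        then show ?thesis by (intro mult_left_mono) (auto simp: wt_nonneg)
      qed simp
    qed
  qed
  also have "\<dots> = (\<Sum>j\<in>{0..m}. (1 / real m + \<bar>q_w D m j - real j / real m\<bar>) * pi_w D m j)"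
    by (rule int_sum_w[OF D])
  also have "\<dots> = 1 / real m * (\<Sum>j\<in>{0..m}. pi_w D m j) + (\<Sum>j\<in>{0..m}. pi_w D m j * \<bar>q_w D m j - real j / real m\<bar>)"
    by (simp add: sum.distrib sum_distrib_left algebra_simps)
  also have "\<dots> = 1 / real m + (\<Sum>j\<in>{0..m}. pi_w D m j * \<bar>q_w D m j - real j / real m\<bar>)"
    using sum_pi[OF D m] by simp
  finally show "(\<integral>x. \<bar>fst x - fst (snd x)\<bar> \<partial>mixJ D m)
      \<le> 1 / real m + (\<Sum>j\<in>{0..m}. pi_w D m j * \<bar>q_w D m j - real j / real m\<bar>)"
    unfolding mix_absint[OF D] .
  have "(\<integral>z. (\<Sum>j\<in>{0..m}. wt m j (fst z) * \<bar>fst z - q_w D m j\<bar>) \<partial>D)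
      \<le> (\<integral>z. (\<Sum>j\<in>{0..m}. wt m j (fst z) * 1) \<partial>D)"
  proof (rule integral_mono_AE')
    show "integrable D (\<lambda>z. \<Sum>j\<in>{0..m}. wt m j (fst z) * 1)"
      by (rule int_sum_w_integrable[OF D])
    show "AE z in D. 0 \<le> (\<Sum>j\<in>{0..m}. wt m j (fst z) * 1)"
      by (intro AE_I2 sum_nonneg) (auto simp: wt_nonneg)
    show "AE z in D. (\<Sum>j\<in>{0..m}. wt m j (fst z) * \<bar>fst z - q_w D m j\<bar>)
       \<le> (\<Sum>j\<in>{0..m}. wt m j (fst z) * 1)"
      using isd(3)[OF D]
    proof eventually_elim
      case (elim z)
      show ?case
      proof (intro sum_mono mult_left_mono)
        fix j
        show "\<bar>fst z - q_w D m j\<bar> \<le> 1" using elim q_range[OF D, of m j] by auto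
      qed (simp add: wt_nonneg)
    qed
  qed
  also have "\<dots> = (\<Sum>j\<in>{0..m}. 1 * pi_w D m j)"
    by (rule int_sum_w[OF D])
  also have "\<dots> = 1" using sum_pi[OF D m] by simp
  finally show "(\<integral>x. \<bar>fst x - fst (snd x)\<bar> \<partial>mixJ D m) \<le> 1"
    unfolding mix_absint[OF D] .
qed

lemma mix_coupling:
  assumes D: "is_dist D" and m: "m \<ge> 1"
  shows "mixJ D m \<in> couplings D"
  unfolding couplings_def
proof (intro CollectI conjI)
  show "prob_space (mixJ D m)" by (rule mix_prob[OF D m])
  show "sets (mixJ D m) = sets ppy_space" by (rule mix_sets)
  show "AE z in mixJ D m. fst z \<in> {0..1} \<and> fst (snd z) \<in> {0..1}"
  proof (rule mix_AE[OF D])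
    show "{x \<in> space ppy_space. \<not> (fst x \<in> {0..1} \<and> fst (snd x) \<in> {0..1})} \<in> sets ppy_space"
      unfolding ppy_space_def by measurable
    show "AE z in D. \<forall>j\<in>{0..m}. fst (fst z, q_w D m j, snd z) \<in> {0..1} \<and>
        fst (snd (fst z, q_w D m j, snd z)) \<in> {0..1}"
      using isd(3)[OF D] by eventually_elim (auto simp: q_range[OF D])
  qed
  show "distr (mixJ D m) py_space (\<lambda>(p, p', y). (p, y)) = D" by (rule mix_marg[OF D m])
  show "calibrated (distr (mixJ D m) py_space (\<lambda>(p, p', y). (p', y)))" by (rule mix_cal[OF D])
qed


lemma cal_ext:
  fixes N :: "(real \<times> bool) measure"
  assumes cal: "calibrated N" and sN: "sets N = sets py_space" and ae: "AE z in N. fst z \<in> {0..1}"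
    and pN: "prob_space N"
    and f: "f \<in> borel_measurable borel" and f0: "\<And>x. 0 \<le> f x" and f1: "\<And>x. f x \<le> 1"
  shows "(\<integral>z. f (fst z) * of_bool (snd z) \<partial>N) = (\<integral>z. f (fst z) * fst z \<partial>N)"
proof -
  have mN: "measurable N M = measurable py_space M" for M :: "'b measure"
    using sN by (rule measurable_cong_sets) simp
  have fstm: "fst \<in> measurable N borel" unfolding mN py_space_def by measurable
  have Ym: "(\<lambda>z. of_bool (snd z) :: real) \<in> borel_measurable N" unfolding mN py_space_def by measurable
  have Fm: "(\<lambda>z. fst z :: real) \<in> borel_measurable N" unfolding mN py_space_def by measurable
  have indm: "(\<lambda>z. indicator A (fst z) :: real) \<in> borel_measurable N" if A[measurable]: "A \<in> sets borel" for A
    unfolding mN py_space_def by measurable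
  define nu1 where "nu1 = distr (density N (\<lambda>z. ennreal (of_bool (snd z)))) borel fst"
  define nu2 where "nu2 = distr (density N (\<lambda>z. ennreal (fst z))) borel fst"
  have fst1: "fst \<in> measurable (density N (\<lambda>z. ennreal (of_bool (snd z)))) borel"
    using fstm by simp
  have fst2: "fst \<in> measurable (density N (\<lambda>z. ennreal (fst z))) borel"
    using fstm by simp
  have "nu1 = nu2"
  proof (rule measure_eqI)
    show "sets nu1 = sets nu2" unfolding nu1_def nu2_def by simp
    fix A assume "A \<in> sets nu1"
    then have A: "A \<in> sets borel" unfolding nu1_def by simp
    have S: "fst -` A \<inter> space N \<in> sets N" using fstm A by (rule measurable_sets)
    have i1: "integrable N (\<lambda>z. indicator A (fst z) * of_bool (snd z) :: real)"
      by (rule int_bdd[OF pN, where B=1]) (use indm[OF A] Ym in \<open>auto simp: indicator_def\<close>)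
    have i2: "integrable N (\<lambda>z. indicator A (fst z) * fst z :: real)"
      by (rule int_bdd[OF pN, where B=1]) (use indm[OF A] Fm ae in \<open>auto simp: indicator_def\<close>)
    have "emeasure nu1 A = emeasure (density N (\<lambda>z. ennreal (of_bool (snd z)))) (fst -` A \<inter> space N)"
      unfolding nu1_def by (subst emeasure_distr[OF fst1 A]) simp
    also have "\<dots> = (\<integral>\<^sup>+ z. ennreal (of_bool (snd z)) * indicator (fst -` A \<inter> space N) z \<partial>N)"
      by (rule emeasure_density) (use Ym S in auto)
    also have "\<dots> = (\<integral>\<^sup>+ z. ennreal (indicator A (fst z) * of_bool (snd z)) \<partial>N)"
      by (rule nn_integral_cong) (auto simp: indicator_def)
    also have "\<dots> = ennreal (\<integral>z. indicator A (fst z) * of_bool (snd z) \<partial>N)"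
      by (rule nn_integral_eq_integral[OF i1]) auto
    also have "(\<integral>z. indicator A (fst z) * of_bool (snd z) \<partial>N) = (\<integral>z. indicator A (fst z) * fst z \<partial>N)"
      using cal A unfolding calibrated_def by blast
    also have "ennreal \<dots> = (\<integral>\<^sup>+ z. ennreal (indicator A (fst z) * fst z) \<partial>N)"
      by (rule nn_integral_eq_integral[OF i2, symmetric]) (use ae in \<open>auto simp: indicator_def\<close>)
    also have "\<dots> = (\<integral>\<^sup>+ z. ennreal (fst z) * indicator (fst -` A \<inter> space N) z \<partial>N)"
      by (rule nn_integral_cong) (auto simp: indicator_def)
    also have "\<dots> = emeasure (density N (\<lambda>z. ennreal (fst z))) (fst -` A \<inter> space N)"
      by (rule emeasure_density[symmetric]) (use Fm S in auto)
    also have "\<dots> = emeasure nu2 A"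
      unfolding nu2_def by (subst emeasure_distr[OF fst2 A]) simp
    finally show "emeasure nu1 A = emeasure nu2 A" .
  qed
  have "(\<integral>z. f (fst z) * of_bool (snd z) \<partial>N) = (\<integral>x. f x \<partial>nu1)"
    unfolding nu1_def
    by (subst integral_distr[OF fst1 f], subst integral_density) (use f fstm Ym in \<open>auto simp: mult.commute\<close>)
  also have "\<dots> = (\<integral>x. f x \<partial>nu2)" using \<open>nu1 = nu2\<close> by simp
  also have "\<dots> = (\<integral>z. f (fst z) * fst z \<partial>N)"
    unfolding nu2_def
    by (subst integral_distr[OF fst2 f], subst integral_density) (use f fstm Fm ae in \<open>auto simp: mult.commute\<close>)
  finally show ?thesis .
qed


lemma bnd1: "0 \<le> w \<Longrightarrow> w \<le> (1::real) \<Longrightarrow> \<bar>t\<bar> \<le> 2 \<Longrightarrow> \<bar>w * t\<bar> \<le> 2"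
  by (simp add: abs_mult) (metis abs_ge_zero mult_le_one mult.commute mult_left_mono order_trans
      mult_right_mono mult_1_left)

lemma bnd2:
  assumes "(s = 1 \<or> s = -1)" "0 \<le> w" "w \<le> (1::real)" "t \<in> {0..1}"
  shows "\<bar>s * (w * t)\<bar> \<le> 2"
proof -
  have "0 \<le> w * t" "w * t \<le> 1" using assms mult_le_one[of w t] by auto
  then show ?thesis using assms(1) by (auto simp: abs_mult)
qed

lemma bnd3: "(s = 1 \<or> s = -1) \<Longrightarrow> 0 \<le> a \<Longrightarrow> a \<le> 2 \<Longrightarrow> 0 \<le> w \<Longrightarrow> w \<le> (1::real) \<Longrightarrow> \<bar>s * a * w\<bar> \<le> 2"
  by (auto simp: abs_mult intro: order_trans[OF mult_left_le[of w a]])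

lemma ub_key:
  assumes D: "is_dist D" and J: "J \<in> couplings D" and m: "m \<ge> 1"
  shows "\<And>j a. 0 \<le> a \<Longrightarrow> a \<le> 2 \<Longrightarrow> real (j+1) / real m \<le> a \<Longrightarrow>
      pi_w D m j * max (q_w D m j - a) 0 \<le> 2 * (\<integral>x. \<bar>wt m j (fst x) - wt m j (fst (snd x))\<bar> \<partial>J)"
    and "\<And>j b. 0 \<le> b \<Longrightarrow> b \<le> 1 \<Longrightarrow> b \<le> (real j - 1) / real m \<Longrightarrow>
      pi_w D m j * max (b - q_w D m j) 0 \<le> 2 * (\<integral>x. \<bar>wt m j (fst x) - wt m j (fst (snd x))\<bar> \<partial>J)"
proof -
  from J have pJ: "prob_space J" and sJ: "sets J = sets ppy_space"
    and aeJ: "AE z in J. fst z \<in> {0..1} \<and> fst (snd z) \<in> {0..1}"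
    and marg: "distr J py_space (\<lambda>x. (fst x, snd (snd x))) = D"
    and cal: "calibrated (distr J py_space (\<lambda>x. (fst (snd x), snd (snd x))))"
    unfolding couplings_def pr1_eq pr2_eq by auto
  have mJ: "measurable J M = measurable ppy_space M" for M :: "'b measure"
    using sJ by (rule measurable_cong_sets) simp
  define N where "N = distr J py_space (\<lambda>x. (fst (snd x), snd (snd x)))"
  have p1m: "(\<lambda>x. (fst x, snd (snd x))) \<in> measurable J py_space" unfolding mJ by (rule pr1_meas)
  have p2m: "(\<lambda>x. (fst (snd x), snd (snd x))) \<in> measurable J py_space" unfolding mJ by (rule pr2_meas)
  have pN: "prob_space N" unfolding N_def by (rule prob_space.prob_space_distr[OF pJ p2m])
  have sN: "sets N = sets py_space" unfolding N_def by simp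
  have aeN: "AE z in N. fst z \<in> {0..1}"
    unfolding N_def
    by (subst AE_distr_iff[OF p2m]) (use aeJ in \<open>auto simp: py_space_def\<close>)
  have calN: "calibrated N" using cal unfolding N_def .
  have mN: "measurable N M = measurable py_space M" for M :: "'b measure"
    using sN by (rule measurable_cong_sets) simp
  let ?w = "wt m"
  let ?Y = "\<lambda>x::real \<times> real \<times> bool. of_bool (snd (snd x)) :: real"
  have ibJ: "integrable J f" if "f \<in> borel_measurable ppy_space" "AE x in J. \<bar>f x\<bar> \<le> B" for f :: "_ \<Rightarrow> real" and B
    by (rule int_bdd[OF pJ _ that(2)]) (use that(1) mJ in auto)
  have ibN: "integrable N f" if "f \<in> borel_measurable py_space" "AE x in N. \<bar>f x\<bar> \<le> B" for f :: "_ \<Rightarrow> real" and B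
    by (rule int_bdd[OF pN _ that(2)]) (use that(1) mN in auto)
  have DJ: "(\<integral>z. F z \<partial>D) = (\<integral>x. F (fst x, snd (snd x)) \<partial>J)" if "F \<in> borel_measurable py_space" for F :: "_ \<Rightarrow> real"
    using integral_distr[OF p1m that] marg by simp
  have NJ: "(\<integral>z. F z \<partial>N) = (\<integral>x. F (fst (snd x), snd (snd x)) \<partial>J)" if "F \<in> borel_measurable py_space" for F :: "_ \<Rightarrow> real"
    using integral_distr[OF p2m that] unfolding N_def by simp
  have gen: "pi_w D m j * (s * (q_w D m j - a)) \<le> 2 * (\<integral>x. \<bar>?w j (fst x) - ?w j (fst (snd x))\<bar> \<partial>J)"
    if s: "s = 1 \<or> s = -1" and a: "0 \<le> a" "a \<le> 2"
      and sign: "\<And>p. ?w j p * (s * (p - a)) \<le> 0" for j s a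
  proof -
    have wm[measurable]: "?w j \<in> borel_measurable borel" by simp
    have sa: "\<bar>s * (t - a)\<bar> \<le> 2" if "t \<in> {0..1}" for t using s a that by auto
    have m1: "(\<lambda>z. ?w j (fst z) * (s * (of_bool (snd z) - a))) \<in> borel_measurable py_space"
      unfolding py_space_def by measurable
    have "pi_w D m j * (s * (q_w D m j - a)) = s * (pi_w D m j * q_w D m j) - s * a * pi_w D m j"
      by (simp add: algebra_simps)
    also have "\<dots> = s * (\<integral>z. ?w j (fst z) * of_bool (snd z) \<partial>D) - s * a * (\<integral>z. ?w j (fst z) \<partial>D)"
      unfolding piq[OF D] by (simp add: pi_w_def)
    also have "\<dots> = (\<integral>z. ?w j (fst z) * (s * (of_bool (snd z) - a)) \<partial>D)"
    proof -
      have i1: "integrable D (\<lambda>z. s * (?w j (fst z) * of_bool (snd z)))"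
        by (intro Bochner_Integration.integrable_mult_right int_D[OF D wtY_meas, where B=1]) (simp add: wt_nonneg wt_le1)
      have i2: "integrable D (\<lambda>z. s * a * ?w j (fst z))"
        by (intro Bochner_Integration.integrable_mult_right int_D[OF D wt_fst_meas, where B=1]) (simp add: wt_nonneg wt_le1)
      have "(\<integral>z. ?w j (fst z) * (s * (of_bool (snd z) - a)) \<partial>D)
          = (\<integral>z. s * (?w j (fst z) * of_bool (snd z)) - s * a * ?w j (fst z) \<partial>D)"
        by (simp add: algebra_simps)
      also have "\<dots> = (\<integral>z. s * (?w j (fst z) * of_bool (snd z)) \<partial>D) - (\<integral>z. s * a * ?w j (fst z) \<partial>D)"
        by (rule Bochner_Integration.integral_diff[OF i1 i2])
      finally show ?thesis by simp
    qed
    also have "\<dots> = (\<integral>x. ?w j (fst x) * (s * (?Y x - a)) \<partial>J)"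
      using DJ[OF m1] by simp
    finally have eqA: "pi_w D m j * (s * (q_w D m j - a)) = (\<integral>x. ?w j (fst x) * (s * (?Y x - a)) \<partial>J)" .
    have B0: "(\<integral>x. ?w j (fst (snd x)) * (s * (?Y x - a)) \<partial>J) \<le> 0"
    proof -
      have "(\<integral>x. ?w j (fst (snd x)) * (s * (?Y x - a)) \<partial>J) = (\<integral>z. ?w j (fst z) * (s * (of_bool (snd z) - a)) \<partial>N)"
        using NJ[OF m1] by simp
      also have "\<dots> = s * (\<integral>z. ?w j (fst z) * of_bool (snd z) \<partial>N) - s * a * (\<integral>z. ?w j (fst z) \<partial>N)"
      proof -
        have i1: "integrable N (\<lambda>z. s * (?w j (fst z) * of_bool (snd z)))"
        proof (rule ibN[of _ 2])
          show "(\<lambda>z. s * (?w j (fst z) * of_bool (snd z))) \<in> borel_measurable py_space"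
            unfolding py_space_def by measurable
          show "AE z in N. \<bar>s * (?w j (fst z) * of_bool (snd z))\<bar> \<le> 2"
            by (rule AE_I2, rule bnd2) (use s in \<open>auto simp: wt_nonneg wt_le1\<close>)
        qed
        have i2: "integrable N (\<lambda>z. s * a * ?w j (fst z))"
        proof (rule ibN[of _ 2])
          show "(\<lambda>z. s * a * ?w j (fst z)) \<in> borel_measurable py_space"
            unfolding py_space_def by measurable
          show "AE z in N. \<bar>s * a * ?w j (fst z)\<bar> \<le> 2"
            by (rule AE_I2, rule bnd3) (use s a in \<open>auto simp: wt_nonneg wt_le1\<close>)
        qed
        have "(\<integral>z. ?w j (fst z) * (s * (of_bool (snd z) - a)) \<partial>N)
            = (\<integral>z. s * (?w j (fst z) * of_bool (snd z)) - s * a * ?w j (fst z) \<partial>N)"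
          by (simp add: algebra_simps)
        also have "\<dots> = (\<integral>z. s * (?w j (fst z) * of_bool (snd z)) \<partial>N) - (\<integral>z. s * a * ?w j (fst z) \<partial>N)"
          by (rule Bochner_Integration.integral_diff[OF i1 i2])
        finally show ?thesis by simp
      qed
      also have "(\<integral>z. ?w j (fst z) * of_bool (snd z) \<partial>N) = (\<integral>z. ?w j (fst z) * fst z \<partial>N)"
        by (rule cal_ext[OF calN sN aeN pN]) (auto simp: wt_nonneg wt_le1)
      also have "s * (\<integral>z. ?w j (fst z) * fst z \<partial>N) - s * a * (\<integral>z. ?w j (fst z) \<partial>N)
          = (\<integral>z. ?w j (fst z) * (s * (fst z - a)) \<partial>N)"
      proof -
        have i1: "integrable N (\<lambda>z. s * (?w j (fst z) * fst z))"
        proof (rule ibN[of _ 2])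
          show "(\<lambda>z. s * (?w j (fst z) * fst z)) \<in> borel_measurable py_space"
            unfolding py_space_def by measurable
          show "AE z in N. \<bar>s * (?w j (fst z) * fst z)\<bar> \<le> 2"
            using aeN by eventually_elim (rule bnd2, use s in \<open>auto simp: wt_nonneg wt_le1\<close>)
        qed
        have i2: "integrable N (\<lambda>z. s * a * ?w j (fst z))"
        proof (rule ibN[of _ 2])
          show "(\<lambda>z. s * a * ?w j (fst z)) \<in> borel_measurable py_space"
            unfolding py_space_def by measurable
          show "AE z in N. \<bar>s * a * ?w j (fst z)\<bar> \<le> 2"
            by (rule AE_I2, rule bnd3) (use s a in \<open>auto simp: wt_nonneg wt_le1\<close>)
        qed
        have "(\<integral>z. ?w j (fst z) * (s * (fst z - a)) \<partial>N)
            = (\<integral>z. s * (?w j (fst z) * fst z) - s * a * ?w j (fst z) \<partial>N)"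
          by (simp add: algebra_simps)
        also have "\<dots> = (\<integral>z. s * (?w j (fst z) * fst z) \<partial>N) - (\<integral>z. s * a * ?w j (fst z) \<partial>N)"
          by (rule Bochner_Integration.integral_diff[OF i1 i2])
        finally show ?thesis by simp
      qed
      also have "\<dots> \<le> 0"
        using integral_mono_AE'[of N "\<lambda>_. 0::real" "\<lambda>z. ?w j (fst z) * (s * (fst z - a))"] sign by simp
      finally show ?thesis .
    qed
    have iA: "integrable J (\<lambda>x. ?w j (fst x) * (s * (?Y x - a)))"
    proof (rule ibJ[of _ 2])
      show "(\<lambda>x. ?w j (fst x) * (s * (?Y x - a))) \<in> borel_measurable ppy_space"
        unfolding ppy_space_def by measurable
      show "AE x in J. \<bar>?w j (fst x) * (s * (?Y x - a))\<bar> \<le> 2"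
        by (rule AE_I2, rule bnd1) (use sa in \<open>auto simp: wt_nonneg wt_le1\<close>)
    qed
    have iB: "integrable J (\<lambda>x. ?w j (fst (snd x)) * (s * (?Y x - a)))"
    proof (rule ibJ[of _ 2])
      show "(\<lambda>x. ?w j (fst (snd x)) * (s * (?Y x - a))) \<in> borel_measurable ppy_space"
        unfolding ppy_space_def by measurable
      show "AE x in J. \<bar>?w j (fst (snd x)) * (s * (?Y x - a))\<bar> \<le> 2"
        by (rule AE_I2, rule bnd1) (use sa in \<open>auto simp: wt_nonneg wt_le1\<close>)
    qed
    have iD: "integrable J (\<lambda>x. 2 * \<bar>?w j (fst x) - ?w j (fst (snd x))\<bar>)"
    proof (rule ibJ[of _ 2])
      show "(\<lambda>x. 2 * \<bar>?w j (fst x) - ?w j (fst (snd x))\<bar>) \<in> borel_measurable ppy_space"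
        unfolding ppy_space_def by measurable
      show "AE x in J. \<bar>2 * \<bar>?w j (fst x) - ?w j (fst (snd x))\<bar>\<bar> \<le> 2"
      proof (rule AE_I2)
        fix x :: "real \<times> real \<times> bool"
        have "0 \<le> ?w j (fst x)" "?w j (fst x) \<le> 1" "0 \<le> ?w j (fst (snd x))" "?w j (fst (snd x)) \<le> 1"
          by (auto simp: wt_nonneg wt_le1)
        then show "\<bar>2 * \<bar>?w j (fst x) - ?w j (fst (snd x))\<bar>\<bar> \<le> 2" by (simp add: abs_le_iff)
      qed
    qed
    have "pi_w D m j * (s * (q_w D m j - a))
        \<le> (\<integral>x. ?w j (fst x) * (s * (?Y x - a)) \<partial>J) - (\<integral>x. ?w j (fst (snd x)) * (s * (?Y x - a)) \<partial>J)"
      using eqA B0 by linarith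
    also have "\<dots> = (\<integral>x. ?w j (fst x) * (s * (?Y x - a)) - ?w j (fst (snd x)) * (s * (?Y x - a)) \<partial>J)"
      by (rule Bochner_Integration.integral_diff[OF iA iB, symmetric])
    also have "\<dots> \<le> (\<integral>x. 2 * \<bar>?w j (fst x) - ?w j (fst (snd x))\<bar> \<partial>J)"
    proof (rule integral_mono_AE)
      show "integrable J (\<lambda>x. ?w j (fst x) * (s * (?Y x - a)) - ?w j (fst (snd x)) * (s * (?Y x - a)))"
        using iA iB by simp
      show "AE x in J. ?w j (fst x) * (s * (?Y x - a)) - ?w j (fst (snd x)) * (s * (?Y x - a))
          \<le> 2 * \<bar>?w j (fst x) - ?w j (fst (snd x))\<bar>"
      proof (rule AE_I2)
        fix x :: "real \<times> real \<times> bool"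
        have "\<bar>s * (?Y x - a)\<bar> \<le> 2" using sa[of "?Y x"] by auto
        then have "\<bar>(?w j (fst x) - ?w j (fst (snd x))) * (s * (?Y x - a))\<bar> \<le> \<bar>?w j (fst x) - ?w j (fst (snd x))\<bar> * 2"
          unfolding abs_mult by (intro mult_left_mono) auto
        then show "?w j (fst x) * (s * (?Y x - a)) - ?w j (fst (snd x)) * (s * (?Y x - a))
          \<le> 2 * \<bar>?w j (fst x) - ?w j (fst (snd x))\<bar>"
          by (simp add: left_diff_distrib abs_le_iff)
      qed
    qed (rule iD)
    also have "\<dots> = 2 * (\<integral>x. \<bar>?w j (fst x) - ?w j (fst (snd x))\<bar> \<partial>J)" by simp
    finally show ?thesis .
  qed
  have I0: "0 \<le> (\<integral>x. \<bar>?w j (fst x) - ?w j (fst (snd x))\<bar> \<partial>J)" for j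
    by (rule integral_nonneg_AE) auto
  show "pi_w D m j * max (q_w D m j - a) 0 \<le> 2 * (\<integral>x. \<bar>wt m j (fst x) - wt m j (fst (snd x))\<bar> \<partial>J)"
    if "0 \<le> a" "a \<le> 2" "real (j+1) / real m \<le> a" for j a
  proof -
    have sign: "wt m j p * (1 * (p - a)) \<le> 0" for p
    proof (cases "wt m j p = 0")
      case False
      then have "\<bar>real m * p - real j\<bar> < 1" by (rule wt_pos)
      then have "p \<le> real (j+1) / real m" using m by (simp add: field_simps abs_less_iff)
      then show ?thesis using that by (intro mult_nonneg_nonpos) (auto simp: wt_nonneg)
    qed simp
    have "pi_w D m j * (1 * (q_w D m j - a)) \<le> 2 * (\<integral>x. \<bar>?w j (fst x) - ?w j (fst (snd x))\<bar> \<partial>J)"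
      by (rule gen) (use that sign in auto)
    then show ?thesis using I0[of j] pi_nonneg[OF D, of m j]
      by (cases "q_w D m j - a \<ge> 0") (auto simp: max_def mult_le_0_iff)
  qed
  show "pi_w D m j * max (b - q_w D m j) 0 \<le> 2 * (\<integral>x. \<bar>wt m j (fst x) - wt m j (fst (snd x))\<bar> \<partial>J)"
    if "0 \<le> b" "b \<le> 1" "b \<le> (real j - 1) / real m" for j b
  proof -
    have sign: "wt m j p * (- 1 * (p - b)) \<le> 0" for p
    proof (cases "wt m j p = 0")
      case False
      then have "\<bar>real m * p - real j\<bar> < 1" by (rule wt_pos)
      then have "(real j - 1) / real m \<le> p" using m by (simp add: field_simps abs_less_iff)
      then have "- 1 * (p - b) \<le> 0" using that by (simp; linarith)
      then show ?thesis by (metis mult_nonneg_nonpos wt_nonneg)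
    qed simp
    have "pi_w D m j * (- 1 * (q_w D m j - b)) \<le> 2 * (\<integral>x. \<bar>?w j (fst x) - ?w j (fst (snd x))\<bar> \<partial>J)"
      by (rule gen) (use that sign in auto)
    then show ?thesis using I0[of j] pi_nonneg[OF D, of m j]
      by (cases "b - q_w D m j \<ge> 0") (auto simp: max_def mult_le_0_iff)
  qed
qed


lemma coupling_facts:
  assumes J: "J \<in> couplings D"
  shows "prob_space J" "integrable J (\<lambda>x. \<bar>fst x - fst (snd x)\<bar>)"
    "0 \<le> (\<integral>x. \<bar>fst x - fst (snd x)\<bar> \<partial>J)" "(\<integral>x. \<bar>fst x - fst (snd x)\<bar> \<partial>J) \<le> 1"
proof -
  from J have pJ: "prob_space J" and sJ: "sets J = sets ppy_space"
    and aeJ: "AE z in J. fst z \<in> {0..1} \<and> fst (snd z) \<in> {0..1}"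
    unfolding couplings_def by auto
  show "prob_space J" by fact
  have mJ: "measurable J M = measurable ppy_space M" for M :: "'b measure"
    using sJ by (rule measurable_cong_sets) simp
  have mm: "(\<lambda>x. \<bar>fst x - fst (snd x)\<bar>) \<in> borel_measurable J"
    unfolding mJ ppy_space_def by measurable
  have ae1: "AE x in J. \<bar>\<bar>fst x - fst (snd x)\<bar>\<bar> \<le> 1"
    using aeJ by eventually_elim auto
  show ii: "integrable J (\<lambda>x. \<bar>fst x - fst (snd x)\<bar>)"
    by (rule int_bdd[OF pJ mm ae1])
  show "0 \<le> (\<integral>x. \<bar>fst x - fst (snd x)\<bar> \<partial>J)" by (rule integral_nonneg_AE) auto
  have i1: "integrable J (\<lambda>_. 1::real)" by (rule int_bdd[OF pJ, of _ 1]) auto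
  have "(\<integral>x. \<bar>fst x - fst (snd x)\<bar> \<partial>J) \<le> (\<integral>x. 1 \<partial>J)"
    by (rule integral_mono_AE[OF ii i1]) (use aeJ in \<open>eventually_elim, auto\<close>)
  then show "(\<integral>x. \<bar>fst x - fst (snd x)\<bar> \<partial>J) \<le> 1"
    using prob_space.prob_space[OF pJ] by simp
qed

lemma ub_m:
  assumes D: "is_dist D" and J: "J \<in> couplings D" and m: "m \<ge> 1"
  shows "SCDL_m D m \<le> 6 * real m * (\<integral>x. \<bar>fst x - fst (snd x)\<bar> \<partial>J)"
proof -
  from J have pJ: "prob_space J" and sJ: "sets J = sets ppy_space"
    and aeJ: "AE z in J. fst z \<in> {0..1} \<and> fst (snd z) \<in> {0..1}"
    unfolding couplings_def by auto
  have mJ: "measurable J M = measurable ppy_space M" for M :: "'b measure"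
    using sJ by (rule measurable_cong_sets) simp
  define I where "I = (\<lambda>j. (\<integral>x. \<bar>wt m j (fst x) - wt m j (fst (snd x))\<bar> \<partial>J))"
  define e where "e = (\<integral>x. \<bar>fst x - fst (snd x)\<bar> \<partial>J)"
  have iI: "integrable J (\<lambda>x. \<bar>wt m j (fst x) - wt m j (fst (snd x))\<bar>)" for j
  proof (rule int_bdd[OF pJ, of _ 1])
    show "(\<lambda>x. \<bar>wt m j (fst x) - wt m j (fst (snd x))\<bar>) \<in> borel_measurable J"
      unfolding mJ ppy_space_def by measurable
    show "AE x in J. \<bar>\<bar>wt m j (fst x) - wt m j (fst (snd x))\<bar>\<bar> \<le> 1"
    proof (rule AE_I2)
      fix x :: "real \<times> real \<times> bool"
      have "0 \<le> wt m j (fst x)" "wt m j (fst x) \<le> 1" "0 \<le> wt m j (fst (snd x))" "wt m j (fst (snd x)) \<le> 1"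
        by (auto simp: wt_nonneg wt_le1)
      then show "\<bar>\<bar>wt m j (fst x) - wt m j (fst (snd x))\<bar>\<bar> \<le> 1" by (simp add: abs_le_iff)
    qed
  qed
  have sumI: "(\<Sum>j\<in>{0..m}. I j) \<le> 3 * real m * e"
  proof -
    have "(\<Sum>j\<in>{0..m}. I j) = (\<integral>x. (\<Sum>j\<in>{0..m}. \<bar>wt m j (fst x) - wt m j (fst (snd x))\<bar>) \<partial>J)"
      unfolding I_def by (rule Bochner_Integration.integral_sum[symmetric]) (rule iI)
    also have "\<dots> \<le> (\<integral>x. 3 * real m * \<bar>fst x - fst (snd x)\<bar> \<partial>J)"
    proof (rule integral_mono_AE')
      show "integrable J (\<lambda>x. 3 * real m * \<bar>fst x - fst (snd x)\<bar>)"
        using coupling_facts(2)[OF J] by simp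
    qed (auto intro!: AE_I2 wt_lip)
    also have "\<dots> = 3 * real m * e" unfolding e_def by simp
    finally show ?thesis .
  qed
  have I0: "0 \<le> I j" for j unfolding I_def by (rule integral_nonneg_AE) auto
  have Ti: "(\<Sum>j\<in>{0..i}. pi_w D m j * max (q_w D m j - real (i + 1) / real m) 0)
    + (\<Sum>j\<in>{i+1..m}. pi_w D m j * max (real i / real m - q_w D m j) 0) \<le> 6 * real m * e"
    if i: "i \<in> {0..m}" for i
  proof -
    have "(\<Sum>j\<in>{0..i}. pi_w D m j * max (q_w D m j - real (i + 1) / real m) 0) \<le> (\<Sum>j\<in>{0..i}. 2 * I j)"
    proof (rule sum_mono)
      fix j assume j: "j \<in> {0..i}"
      have a2: "real (i + 1) / real m \<le> 2" using i m by (simp add: field_simps)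
      have aj: "real (j+1) / real m \<le> real (i + 1) / real m" using j m by (simp add: divide_right_mono)
      show "pi_w D m j * max (q_w D m j - real (i + 1) / real m) 0 \<le> 2 * I j"
        unfolding I_def by (rule ub_key(1)[OF D J m]) (use a2 aj in auto)
    qed
    moreover have "(\<Sum>j\<in>{i+1..m}. pi_w D m j * max (real i / real m - q_w D m j) 0) \<le> (\<Sum>j\<in>{i+1..m}. 2 * I j)"
    proof (rule sum_mono)
      fix j assume j: "j \<in> {i+1..m}"
      have b1: "real i / real m \<le> 1" using i m by (simp add: field_simps)
      have bj: "real i / real m \<le> (real j - 1) / real m" using j m by (intro divide_right_mono) auto
      show "pi_w D m j * max (real i / real m - q_w D m j) 0 \<le> 2 * I j"
        unfolding I_def by (rule ub_key(2)[OF D J m]) (use b1 bj in auto)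
    qed
    moreover have "(\<Sum>j\<in>{0..i}. 2 * I j) + (\<Sum>j\<in>{i+1..m}. 2 * I j) = (\<Sum>j\<in>{0..m}. 2 * I j)"
    proof -
      have "{0..m} = {0..i} \<union> {i+1..m}" using i by auto
      then show ?thesis by (simp add: sum.union_disjoint)
    qed
    moreover have "(\<Sum>j\<in>{0..m}. 2 * I j) \<le> 6 * real m * e"
    proof -
      have "(\<Sum>j\<in>{0..m}. 2 * I j) = 2 * (\<Sum>j\<in>{0..m}. I j)" by (simp add: sum_distrib_left)
      then show ?thesis using sumI by linarith
    qed
    ultimately show ?thesis by linarith
  qed
  show ?thesis unfolding SCDL_m_def e_def[symmetric]
    by (rule Max.boundedI) (use Ti in auto)
qed


lemma dc_facts:
  assumes D: "is_dist D"
  shows "couplings D \<noteq> {}" "0 \<le> DistCal D"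
    "\<And>J. J \<in> couplings D \<Longrightarrow> DistCal D \<le> (\<integral>x. \<bar>fst x - fst (snd x)\<bar> \<partial>J)"
proof -
  show ne: "couplings D \<noteq> {}" using mix_coupling[OF D, of 1] by auto
  show "0 \<le> DistCal D" unfolding DistCal_def
    by (rule cINF_greatest[OF ne]) (rule coupling_facts(3))
  show "DistCal D \<le> (\<integral>x. \<bar>fst x - fst (snd x)\<bar> \<partial>J)" if "J \<in> couplings D" for J
    unfolding DistCal_def
  proof (rule cINF_lower[OF _ that])
    show "bdd_below ((\<lambda>J. \<integral>x. \<bar>fst x - fst (snd x)\<bar> \<partial>J) ` couplings D)"
      by (rule bdd_belowI[of _ 0]) (auto intro: coupling_facts(3))
  qed
qed

lemma qdev:
  assumes m: "m > 0"
  shows "\<bar>q - real j / real m\<bar> \<le> 1 / real m + (max (q - real (j+1) / real m) 0 + max ((real j - 1) / real m - q) 0)"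
proof -
  have e1: "real (j+1) / real m = real j / real m + 1 / real m" by (simp add: add_divide_distrib)
  have e2: "(real j - 1) / real m = real j / real m - 1 / real m" by (simp add: diff_divide_distrib)
  show ?thesis unfolding e1 e2 by (auto simp: abs_if max_def)
qed

lemma amgm:
  fixes t s eps :: real
  assumes "0 < eps" "0 \<le> t" "0 \<le> s"
  shows "t + s \<le> (t\<^sup>2 + s\<^sup>2) / eps + eps / 2"
proof -
  have "(t + s)\<^sup>2 \<le> 2 * (t\<^sup>2 + s\<^sup>2)"
    using zero_le_square[of "t - s"] by (simp add: power2_eq_square algebra_simps)
  moreover have "2 * eps * (t + s) \<le> (t + s)\<^sup>2 + eps\<^sup>2"
    using zero_le_square[of "t + s - eps"] by (simp add: power2_eq_square algebra_simps)
  ultimately have "2 * eps * (t + s) \<le> 2 * (t\<^sup>2 + s\<^sup>2) + eps\<^sup>2" by linarith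
  then show ?thesis using assms(1) by (simp add: field_simps power2_eq_square)
qed

lemma lb_m:
  assumes D: "is_dist D" and m: "m \<ge> 1"
  shows "(DistCal D)\<^sup>2 \<le> 121 * max (SCDL_m D m) (1 / real m)"
proof -
  have m0: "m > 0" using m by simp
  define S where "S = SCDL_m D m"
  define M where "M = max S (1 / real m)"
  define eps where "eps = sqrt M"
  define tp where "tp = (\<lambda>j. max (q_w D m j - real (j+1) / real m) 0)"
  define sp where "sp = (\<lambda>j. max ((real j - 1) / real m - q_w D m j) 0)"
  have M0: "0 < M" unfolding M_def using m0 by (simp add: less_max_iff_disj)
  have eps0: "0 < eps" unfolding eps_def using M0 by simp
  have epsM: "eps\<^sup>2 = M" unfolding eps_def using M0 by simp
  have SM: "S \<le> M" unfolding M_def by simp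
  have mM: "1 / real m \<le> M" unfolding M_def by simp
  have core': "(\<Sum>j\<in>{0..m}. pi_w D m j * ((tp j)\<^sup>2 + (sp j)\<^sup>2)) \<le> 8 * S"
    unfolding S_def SCDL_m_def tp_def sp_def
    by (rule core[OF m0]) (auto simp: pi_nonneg[OF D] q_range[OF D])
  have sumpi: "(\<Sum>j\<in>{0..m}. pi_w D m j) = 1" by (rule sum_pi[OF D m])
  define dl where "dl = DistCal D"
  have dl0: "0 \<le> dl" unfolding dl_def by (rule dc_facts(2)[OF D])
  have dl_mix: "dl \<le> (\<integral>x. \<bar>fst x - fst (snd x)\<bar> \<partial>mixJ D m)"
    unfolding dl_def by (rule dc_facts(3)[OF D mix_coupling[OF D m]])
  have dl1: "dl \<le> 1" using dl_mix mix_dist(2)[OF D m] by linarith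
  have "(\<Sum>j\<in>{0..m}. pi_w D m j * \<bar>q_w D m j - real j / real m\<bar>)
      \<le> (\<Sum>j\<in>{0..m}. pi_w D m j * (1 / real m + ((tp j)\<^sup>2 + (sp j)\<^sup>2) / eps + eps / 2))"
  proof (rule sum_mono, rule mult_left_mono)
    fix j
    have "\<bar>q_w D m j - real j / real m\<bar> \<le> 1 / real m + (tp j + sp j)"
      unfolding tp_def sp_def by (rule qdev[OF m0])
    also have "tp j + sp j \<le> ((tp j)\<^sup>2 + (sp j)\<^sup>2) / eps + eps / 2"
      by (rule amgm[OF eps0]) (auto simp: tp_def sp_def)
    finally show "\<bar>q_w D m j - real j / real m\<bar> \<le> 1 / real m + ((tp j)\<^sup>2 + (sp j)\<^sup>2) / eps + eps / 2"
      by simp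
  qed (rule pi_nonneg[OF D])
  also have "\<dots> = (1 / real m + eps / 2) * (\<Sum>j\<in>{0..m}. pi_w D m j)
        + (\<Sum>j\<in>{0..m}. pi_w D m j * ((tp j)\<^sup>2 + (sp j)\<^sup>2)) / eps"
  proof -
    have pt: "pi_w D m j * (1 / real m + ((tp j)\<^sup>2 + (sp j)\<^sup>2) / eps + eps / 2)
       = (1 / real m + eps / 2) * pi_w D m j + (pi_w D m j * ((tp j)\<^sup>2 + (sp j)\<^sup>2)) / eps" for j
      by (simp add: algebra_simps)
    show ?thesis unfolding pt
      by (simp add: sum.distrib sum_distrib_left sum_divide_distrib)
  qed
  also have "\<dots> \<le> (1 / real m + eps / 2) + 8 * S / eps"
    using core' eps0 sumpi by (simp add: divide_right_mono)
  finally have dev: "(\<Sum>j\<in>{0..m}. pi_w D m j * \<bar>q_w D m j - real j / real m\<bar>)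
      \<le> 1 / real m + eps / 2 + 8 * S / eps" .
  have "8 * S / eps \<le> 8 * M / eps" using SM eps0 by (simp add: divide_right_mono)
  also have "8 * M / eps = 8 * eps"
  proof -
    have "M = eps * eps" using epsM by (simp add: power2_eq_square)
    then show ?thesis using eps0 by simp
  qed
  finally have S8: "8 * S / eps \<le> 8 * eps" .
  have dlb: "dl \<le> 2 * M + 17 / 2 * eps"
    using dl_mix mix_dist(1)[OF D m] dev S8 mM by linarith
  show ?thesis
  proof (cases "M \<le> 1")
    case True
    then have "eps \<le> 1" unfolding eps_def by simp
    then have "eps * eps \<le> eps * 1" using eps0 by (intro mult_left_mono) auto
    moreover have "M = eps * eps" using epsM by (simp add: power2_eq_square)
    ultimately have "M \<le> eps" by simp
    then have "dl \<le> 21 / 2 * eps" using dlb by linarith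
    then have "dl\<^sup>2 \<le> (21 / 2 * eps)\<^sup>2" using dl0 by (intro power_mono) auto
    also have "\<dots> = 441 / 4 * M" using epsM by (simp add: power2_eq_square)
    also have "\<dots> \<le> 121 * M" using M0 by simp
    finally show ?thesis unfolding dl_def M_def S_def .
  next
    case False
    have "dl\<^sup>2 \<le> 1" using dl0 dl1 by (simp add: power_le_one)
    also have "1 \<le> 121 * M" using False by simp
    finally show ?thesis unfolding dl_def M_def S_def .
  qed
qed


lemma SCDL_facts:
  assumes D: "is_dist D"
  shows "0 \<le> SCDL D" "\<And>k. 1 \<le> k \<Longrightarrow> SCDL D \<le> max (SCDL_m D (2 ^ k)) (1 / 2 ^ k)"
proof -
  have ne: "{k::nat. 1 \<le> k} \<noteq> {}" by auto
  have nn: "0 \<le> max (SCDL_m D (2 ^ k)) (1 / 2 ^ k :: real)" for k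
    by (simp add: le_max_iff_disj)
  show "0 \<le> SCDL D" unfolding SCDL_def by (rule cINF_greatest[OF ne nn])
  show "SCDL D \<le> max (SCDL_m D (2 ^ k)) (1 / 2 ^ k)" if "1 \<le> k" for k
    unfolding SCDL_def
    by (rule cINF_lower) (use that nn in \<open>auto intro!: bdd_belowI[of _ 0]\<close>)
qed

lemma lower_bound:
  assumes D: "is_dist D"
  shows "1 / 121 * (DistCal D)\<^sup>2 \<le> SCDL D"
  unfolding SCDL_def
proof (rule cINF_greatest)
  show "{k::nat. 1 \<le> k} \<noteq> {}" by auto
  fix k :: nat assume "k \<in> {k. 1 \<le> k}"
  have m: "(2::nat) ^ k \<ge> 1" by simp
  have "(DistCal D)\<^sup>2 \<le> 121 * max (SCDL_m D (2 ^ k)) (1 / real ((2::nat) ^ k))"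
    by (rule lb_m[OF D m])
  then show "1 / 121 * (DistCal D)\<^sup>2 \<le> max (SCDL_m D (2 ^ k)) (1 / 2 ^ k)" by simp
qed

lemma upper_one:
  assumes D: "is_dist D" and J: "J \<in> couplings D"
    and e: "(\<integral>x. \<bar>fst x - fst (snd x)\<bar> \<partial>J) \<le> e'" and e0: "0 < e'" and e1: "e' \<le> 1"
  shows "SCDL D \<le> 12 * sqrt e'"
proof -
  define e where "e = (\<integral>x. \<bar>fst x - fst (snd x)\<bar> \<partial>J)"
  have ee: "e \<le> e'" using e unfolding e_def .
  have e00: "0 \<le> e" unfolding e_def by (rule coupling_facts(3)[OF J])
  define r where "r = sqrt e'"
  have r0: "0 < r" unfolding r_def using e0 by simp
  have r1: "r \<le> 1" unfolding r_def using e1 by simp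
  have err: "e' = r * r" unfolding r_def using e0 by simp
  define P where "P = (\<lambda>k::nat. 1 \<le> k \<and> (1/2::real) ^ k \<le> r)"
  obtain n where n: "(1/2::real) ^ n < r" using real_arch_pow_inv[OF r0, of "1/2"] by auto
  have "(1/2::real) ^ (max n 1) \<le> (1/2) ^ n" by (rule power_decreasing) auto
  then have "(1/2::real) ^ (max n 1) \<le> r" using n by linarith
  then have "P (max n 1)"
    unfolding P_def by auto
  then have exP: "\<exists>k. P k" by blast
  define k where "k = (LEAST k. P k)"
  have Pk: "P k" unfolding k_def by (rule LeastI_ex[OF exP])
  have k1: "1 \<le> k" and kr: "(1/2::real) ^ k \<le> r" using Pk unfolding P_def by auto
  have "SCDL D \<le> max (SCDL_m D (2 ^ k)) (1 / 2 ^ k)" by (rule SCDL_facts(2)[OF D k1])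
  also have "SCDL_m D (2 ^ k) \<le> 6 * real ((2::nat) ^ k) * e"
    unfolding e_def by (rule ub_m[OF D J]) simp
  also have "6 * real ((2::nat) ^ k) * e \<le> 12 * r"
  proof (cases "k = 1")
    case True
    have "6 * real ((2::nat) ^ k) * e = 12 * e" using True by simp
    also have "\<dots> \<le> 12 * e'" using ee by simp
    also have "e' \<le> r" using err r1 r0 by (simp add: mult_le_cancel_left1)
    finally show ?thesis by simp
  next
    case False
    then have "k - 1 < k" "1 \<le> k - 1" using k1 by auto
    then have "\<not> P (k - 1)" unfolding k_def using not_less_Least by blast
    then have "r < (1/2::real) ^ (k - 1)" unfolding P_def using \<open>1 \<le> k - 1\<close> by auto
    then have "r * 2 ^ (k - 1) < 1" by (simp add: power_one_over field_simps)
    moreover have "(2::real) ^ k = 2 * 2 ^ (k - 1)" using k1 by (simp add: power_eq_if)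
    ultimately have r2: "r * 2 ^ k < 2" by simp
    have "6 * real ((2::nat) ^ k) * e \<le> 6 * 2 ^ k * (r * r)" using ee err by simp
    also have "\<dots> = 6 * r * (r * 2 ^ k)" by (simp add: algebra_simps)
    also have "\<dots> \<le> 6 * r * 2" using r2 r0 by (intro mult_left_mono) auto
    finally show ?thesis by simp
  qed
  also have "(1 / 2 ^ k :: real) \<le> 12 * r" using kr r0 by (simp add: power_one_over)
  finally have "SCDL D \<le> max (12 * r) (12 * r)" by (simp add: max_def split: if_splits)
  then show ?thesis unfolding r_def by simp
qed

lemma upper_bound:
  assumes D: "is_dist D"
  shows "SCDL D \<le> 12 * sqrt (DistCal D)"
proof -
  have S0: "0 \<le> SCDL D" by (rule SCDL_facts(1)[OF D])
  have key: "(SCDL D)\<^sup>2 / 144 \<le> (\<integral>x. \<bar>fst x - fst (snd x)\<bar> \<partial>J)" if J: "J \<in> couplings D" for J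
  proof -
    define e where "e = (\<integral>x. \<bar>fst x - fst (snd x)\<bar> \<partial>J)"
    have e0: "0 \<le> e" and e1: "e \<le> 1" unfolding e_def using coupling_facts(3,4)[OF J] by auto
    have bnd: "(SCDL D)\<^sup>2 / 144 \<le> e'" if "e \<le> e'" "0 < e'" "e' \<le> 1" for e'
    proof -
      have "SCDL D \<le> 12 * sqrt e'" by (rule upper_one[OF D J]) (use that in \<open>auto simp: e_def\<close>)
      then have "(SCDL D)\<^sup>2 \<le> (12 * sqrt e')\<^sup>2" using S0 by (intro power_mono) auto
      also have "\<dots> = 144 * e'" using that by (simp add: power_mult_distrib)
      finally show ?thesis by simp
    qed
    show ?thesis
    proof (cases "e < 1")
      case True
      show ?thesis unfolding e_def[symmetric]
        by (rule dense_ge_bounded[OF True]) (use bnd e0 in auto)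
    next
      case False
      then have "e = 1" using e1 by simp
      then show ?thesis unfolding e_def[symmetric] using bnd[of 1] by simp
    qed
  qed
  have "(SCDL D)\<^sup>2 / 144 \<le> DistCal D"
    unfolding DistCal_def by (rule cINF_greatest[OF dc_facts(1)[OF D]]) (rule key)
  then have "(SCDL D)\<^sup>2 \<le> 144 * DistCal D" by simp
  then have "sqrt ((SCDL D)\<^sup>2) \<le> sqrt (144 * DistCal D)" by (rule real_sqrt_le_mono)
  then show ?thesis using S0 by (simp add: real_sqrt_mult)
qed

theorem theorem6p1:
  shows "\<exists>c C::real. c > 0 \<and> C > 0 \<and>
    (\<forall>D. is_dist D \<longrightarrow>
       c * (DistCal D)\<^sup>2 \<le> SCDL D \<and> SCDL D \<le> C * sqrt (DistCal D))"
proof (intro exI conjI allI impI)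
  show "(1 / 121 :: real) > 0" by simp
  show "(12 :: real) > 0" by simp
  fix D assume D: "is_dist D"
  show "1 / 121 * (DistCal D)\<^sup>2 \<le> SCDL D" by (rule lower_bound[OF D])
  show "SCDL D \<le> 12 * sqrt (DistCal D)" by (rule upper_bound[OF D])
qed

end
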